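(* Let $\mathbb{C}$ be an isostable squares category. For every $n\ge0$, the forgetful functor $U_n:S^{\square}_n\mathbb{C}\to\mathcal{V}_n\mathbb{C}$, sending an object $(A_{jk})$ to its rightmost column $A_{0n}\twoheadrightarrow A_{1n}\twoheadrightarrow\cdots\twoheadrightarrow A_{n-1,n}\twoheadrightarrow A_{nn}=O$, is an equivalence of categories.
   Context: A squares category is a flat double category (squares uniquely determined by their boundary; we say a boundary "is a square") with a distinguished object $O$ initial in the horizontal category $\mathcal{H}_{\mathbb{C}}$ (morphisms $\rightarrowtail$) and terminal in the vertical category $\mathcal{V}_{\mathbb{C}}$ (morphisms $\twoheadrightarrow$). A vertical $f:A\twoheadrightarrow B$ is a vertical weak equivalence if the boundary (top $O\rightarrowtail A$, left $\mathrm{id}_O$, right $f$, bottom $O\rightarrowtail B$) is a square; a horizontal $g:A\rightarrowtail B$ is a horizontal weak equivalence if the boundary (top $g$, left $A\twoheadrightarrow O$, right $B\twoheadrightarrow O$, bottom $\mathrm{id}_O$) is a square. Vertical natural transformations between double functors of flat double categories: vertical components $\tau_A$ with $(Ff,\tau_A,\tau_{A'},Gf)$ a square for each horizontal $f$ and commuting naturality squares in the vertical category; $\mathrm{Fun}^v$ is the functor category. With $\boxdot$ the flat double category generated by one square (corners $a,b,c,d$, horizontal $a\rightarrowtail b,c\rightarrowtail d$, vertical $a\twoheadrightarrow c,b\twoheadrightarrow d$), $i:\mathrm{span}\hookrightarrow\boxdot$ on $a\rightarrowtail b,a\twoheadrightarrow c$ and $j:\mathrm{cospan}\hookrightarrow\boxdot$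 on $b\twoheadrightarrow d,c\rightarrowtail d$: a squares category is stable if (i) $i^*$ on $\mathrm{Fun}^v(-,\mathbb{C})$ has a section functor $s$, (ii) there is a natural transformation $w:si^*\Rightarrow\mathrm{id}$ with components the identity at $a,b,c$, (iii) $j^*$ has a section functor $t$, (iv) there is a natural transformation $u:tj^*\Rightarrow\mathrm{id}$ with components the identity at $b,c,d$ and a vertical weak equivalence at $a$. It is isostable if it is stable, its weak equivalences are invertible, and for every boundary with top $f:A\rightarrowtail B$, bottom $k:C\rightarrowtail D$ and vertical isomorphisms $g:A\twoheadrightarrow C$, $h:B\twoheadrightarrow D$, this boundary is a square iff the boundary with top $k$, left $g^{-1}$, right $h^{-1}$, bottom $f$ is a square. $S^{\square}_n\mathbb{C}$: objects are families $(A_{jk})_{0\le j\le k\le n}$ with $A_{jj}=O$, horizontal $A_{jk}\rightarrowtail A_{j,k+1}$, vertical $A_{jk}\twoheadrightarrow A_{j+1,k}$, each unit cell ($j<k<n$) a square; morphisms are families of vertical morphisms $A_{jk}\twoheadrightarrow A'_{jk}$ such that every cell formed with a horizontal generator is a square and every cell formed with a vertical generator commutes in $\mathcal{V}_{\mathbb{C}}$ (their components are vertical weak equivalences). $\mathcal{V}_n\mathbb{C}$ is the category whose objects are sequences $A_1\twoheadrightarrow\cdots\twoheadrightarrow A_n\twoheadrightarrow O$ of vertical morphisms and whose morphisms are families of vertical weak equivalences $A_i\twoheadrightarrow A_i'$ making all the resulting squares commute in $\mathcal{V}_{\mathbb{C}}$. *)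

theory Defs
  imports Main
begin

record ('x, 'm) cat =
  Ob  :: "'x set"
  Hom :: "'x \<Rightarrow> 'x \<Rightarrow> 'm set"
  Cmp :: "'m \<Rightarrow> 'm \<Rightarrow> 'm"   (* Cmp g f = g after f *)
  Id  :: "'x \<Rightarrow> 'm"

definition is_functor ::
  "('x, 'm) cat \<Rightarrow> ('y, 'n) cat \<Rightarrow> ('x \<Rightarrow> 'y) \<Rightarrow> ('x \<Rightarrow> 'x \<Rightarrow> 'm \<Rightarrow> 'n) \<Rightarrow> bool" where
  "is_functor C D Fo Fm \<longleftrightarrow>
     (\<forall>X\<in>Ob C. Fo X \<in> Ob D) \<and>
     (\<forall>X\<in>Ob C. \<forall>Y\<in>Ob C. \<forall>f\<in>Hom C X Y. Fm X Y f \<in> Hom D (Fo X) (Fo Y)) \<and>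
     (\<forall>X\<in>Ob C. Fm X X (Id C X) = Id D (Fo X)) \<and>
     (\<forall>X\<in>Ob C. \<forall>Y\<in>Ob C. \<forall>Z\<in>Ob C. \<forall>f\<in>Hom C X Y. \<forall>g\<in>Hom C Y Z.
        Fm X Z (Cmp C g f) = Cmp D (Fm Y Z g) (Fm X Y f))"

definition is_nat_trans ::
  "('x, 'm) cat \<Rightarrow> ('y, 'n) cat \<Rightarrow> ('x \<Rightarrow> 'y) \<Rightarrow> ('x \<Rightarrow> 'x \<Rightarrow> 'm \<Rightarrow> 'n)
     \<Rightarrow> ('x \<Rightarrow> 'y) \<Rightarrow> ('x \<Rightarrow> 'x \<Rightarrow> 'm \<Rightarrow> 'n) \<Rightarrow> ('x \<Rightarrow> 'n) \<Rightarrow> bool" where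
  "is_nat_trans C D Fo Fm Go Gm \<eta> \<longleftrightarrow>
     (\<forall>X\<in>Ob C. \<eta> X \<in> Hom D (Fo X) (Go X)) \<and>
     (\<forall>X\<in>Ob C. \<forall>Y\<in>Ob C. \<forall>f\<in>Hom C X Y.
        Cmp D (\<eta> Y) (Fm X Y f) = Cmp D (Gm X Y f) (\<eta> X))"

definition is_iso :: "('x, 'm) cat \<Rightarrow> 'x \<Rightarrow> 'x \<Rightarrow> 'm \<Rightarrow> bool" where
  "is_iso C X Y f \<longleftrightarrow> f \<in> Hom C X Y \<and>
     (\<exists>g\<in>Hom C Y X. Cmp C g f = Id C X \<and> Cmp C f g = Id C Y)"

definition is_equivalence ::
  "('x, 'm) cat \<Rightarrow> ('y, 'n) cat \<Rightarrow> ('x \<Rightarrow> 'y) \<Rightarrow> ('x \<Rightarrow> 'x \<Rightarrow> 'm \<Rightarrow> 'n) \<Rightarrow> bool" where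
  "is_equivalence C D Fo Fm \<longleftrightarrow> is_functor C D Fo Fm \<and>
     (\<exists>Go Gm \<eta> \<epsilon>. is_functor D C Go Gm \<and>
        is_nat_trans C C (\<lambda>X. X) (\<lambda>X Y f. f) (\<lambda>X. Go (Fo X))
           (\<lambda>X Y f. Gm (Fo X) (Fo Y) (Fm X Y f)) \<eta> \<and>
        (\<forall>X\<in>Ob C. is_iso C X (Go (Fo X)) (\<eta> X)) \<and>
        is_nat_trans D D (\<lambda>Y. Fo (Go Y)) (\<lambda>Y Y' g. Fm (Go Y) (Go Y') (Gm Y Y' g))
           (\<lambda>Y. Y) (\<lambda>Y Y' g. g) \<epsilon> \<and>
        (\<forall>Y\<in>Ob D. is_iso D (Fo (Go Y)) Y (\<epsilon> Y)))"

text \<open>Being flat,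
  squares are given by a predicate on boundaries: sq top left right bottom.
  Composition is written in applicative order: hcomp g f = g after f.\<close>
record ('o, 'h, 'v) dbl =
  obj   :: "'o set"
  hor   :: "'h set"
  hdom  :: "'h \<Rightarrow> 'o"
  hcod  :: "'h \<Rightarrow> 'o"
  hid   :: "'o \<Rightarrow> 'h"
  hcomp :: "'h \<Rightarrow> 'h \<Rightarrow> 'h"
  ver   :: "'v set"
  vdom  :: "'v \<Rightarrow> 'o"
  vcod  :: "'v \<Rightarrow> 'o"
  vid   :: "'o \<Rightarrow> 'v"
  vcomp :: "'v \<Rightarrow> 'v \<Rightarrow> 'v"
  sq    :: "'h \<Rightarrow> 'v \<Rightarrow> 'v \<Rightarrow> 'h \<Rightarrow> bool"

definition flat_double_cat :: "('o, 'h, 'v) dbl \<Rightarrow> bool" where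
  "flat_double_cat C \<longleftrightarrow>
   \<comment> \<open>horizontal category\<close>
   (\<forall>f\<in>hor C. hdom C f \<in> obj C \<and> hcod C f \<in> obj C) \<and>
   (\<forall>A\<in>obj C. hid C A \<in> hor C \<and> hdom C (hid C A) = A \<and> hcod C (hid C A) = A) \<and>
   (\<forall>f\<in>hor C. \<forall>g\<in>hor C. hcod C f = hdom C g \<longrightarrow>
      hcomp C g f \<in> hor C \<and> hdom C (hcomp C g f) = hdom C f \<and> hcod C (hcomp C g f) = hcod C g) \<and>
   (\<forall>f\<in>hor C. hcomp C f (hid C (hdom C f)) = f \<and> hcomp C (hid C (hcod C f)) f = f) \<and>
   (\<forall>f\<in>hor C. \<forall>g\<in>hor C. \<forall>k\<in>hor C. hcod C f = hdom C g \<longrightarrow> hcod C g = hdom C k \<longrightarrow>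
      hcomp C k (hcomp C g f) = hcomp C (hcomp C k g) f) \<and>
   \<comment> \<open>vertical category\<close>
   (\<forall>f\<in>ver C. vdom C f \<in> obj C \<and> vcod C f \<in> obj C) \<and>
   (\<forall>A\<in>obj C. vid C A \<in> ver C \<and> vdom C (vid C A) = A \<and> vcod C (vid C A) = A) \<and>
   (\<forall>f\<in>ver C. \<forall>g\<in>ver C. vcod C f = vdom C g \<longrightarrow>
      vcomp C g f \<in> ver C \<and> vdom C (vcomp C g f) = vdom C f \<and> vcod C (vcomp C g f) = vcod C g) \<and>
   (\<forall>f\<in>ver C. vcomp C f (vid C (vdom C f)) = f \<and> vcomp C (vid C (vcod C f)) f = f) \<and>
   (\<forall>f\<in>ver C. \<forall>g\<in>ver C. \<forall>k\<in>ver C. vcod C f = vdom C g \<longrightarrow> vcod C g = vdom C k \<longrightarrow>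
      vcomp C k (vcomp C g f) = vcomp C (vcomp C k g) f) \<and>
   \<comment> \<open>squares have well-formed boundaries\<close>
   (\<forall>t l r b. sq C t l r b \<longrightarrow>
      t \<in> hor C \<and> b \<in> hor C \<and> l \<in> ver C \<and> r \<in> ver C \<and>
      vdom C l = hdom C t \<and> vdom C r = hcod C t \<and>
      vcod C l = hdom C b \<and> vcod C r = hcod C b) \<and>
   \<comment> \<open>identity squares\<close>
   (\<forall>v\<in>ver C. sq C (hid C (vdom C v)) v v (hid C (vcod C v))) \<and>
   (\<forall>h\<in>hor C. sq C h (vid C (hdom C h)) (vid C (hcod C h)) h) \<and>
   \<comment> \<open>horizontal and vertical composition of squares\<close>
   (\<forall>t l m b t' r b'. sq C t l m b \<longrightarrow> sq C t' m r b' \<longrightarrow>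
      sq C (hcomp C t' t) l r (hcomp C b' b)) \<and>
   (\<forall>t l r m l' r' b. sq C t l r m \<longrightarrow> sq C m l' r' b \<longrightarrow>
      sq C t (vcomp C l' l) (vcomp C r' r) b)"

definition squares_cat :: "('o, 'h, 'v) dbl \<Rightarrow> 'o \<Rightarrow> bool" where
  "squares_cat C Z \<longleftrightarrow> flat_double_cat C \<and> Z \<in> obj C \<and>
     (\<forall>A\<in>obj C. \<exists>!h. h \<in> hor C \<and> hdom C h = Z \<and> hcod C h = A) \<and>
     (\<forall>A\<in>obj C. \<exists>!v. v \<in> ver C \<and> vdom C v = A \<and> vcod C v = Z)"

definition hinit :: "('o, 'h, 'v) dbl \<Rightarrow> 'o \<Rightarrow> 'o \<Rightarrow> 'h" where
  "hinit C Z A = (THE h. h \<in> hor C \<and> hdom C h = Z \<and> hcod C h = A)"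

definition vterm :: "('o, 'h, 'v) dbl \<Rightarrow> 'o \<Rightarrow> 'o \<Rightarrow> 'v" where
  "vterm C Z A = (THE v. v \<in> ver C \<and> vdom C v = A \<and> vcod C v = Z)"

definition vweq :: "('o, 'h, 'v) dbl \<Rightarrow> 'o \<Rightarrow> 'v \<Rightarrow> bool" where
  "vweq C Z f \<longleftrightarrow> f \<in> ver C \<and>
     sq C (hinit C Z (vdom C f)) (vid C Z) f (hinit C Z (vcod C f))"

definition hweq :: "('o, 'h, 'v) dbl \<Rightarrow> 'o \<Rightarrow> 'h \<Rightarrow> bool" where
  "hweq C Z g \<longleftrightarrow> g \<in> hor C \<and>
     sq C g (vterm C Z (hdom C g)) (vterm C Z (hcod C g)) (hid C Z)"

definition v_inverse :: "('o, 'h, 'v) dbl \<Rightarrow> 'v \<Rightarrow> 'v \<Rightarrow> bool" where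
  "v_inverse C f g \<longleftrightarrow> f \<in> ver C \<and> g \<in> ver C \<and>
     vdom C g = vcod C f \<and> vcod C g = vdom C f \<and>
     vcomp C g f = vid C (vdom C f) \<and> vcomp C f g = vid C (vcod C f)"

definition h_inverse :: "('o, 'h, 'v) dbl \<Rightarrow> 'h \<Rightarrow> 'h \<Rightarrow> bool" where
  "h_inverse C f g \<longleftrightarrow> f \<in> hor C \<and> g \<in> hor C \<and>
     hdom C g = hcod C f \<and> hcod C g = hdom C f \<and>
     hcomp C g f = hid C (hdom C f) \<and> hcomp C f g = hid C (hcod C f)"

section \<open>The vertical functor categories Fun^v(span,C), Fun^v(boxdot,C), Fun^v(cospan,C)\<close>

text \<open>A double functor span -> C is a pair (h, v) with h : a >-> b, v : a ->> c.
  A vertical transformation is (tau_a, tau_b, tau_c).\<close>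
definition span_cat :: "('o, 'h, 'v) dbl \<Rightarrow> ('h \<times> 'v, 'v \<times> 'v \<times> 'v) cat" where
  "span_cat C = \<lparr> Ob = {(h, v). h \<in> hor C \<and> v \<in> ver C \<and> hdom C h = vdom C v},
     Hom = (\<lambda>(h, v) (h', v'). {(ta, tb, tc).
        ta \<in> ver C \<and> tb \<in> ver C \<and> tc \<in> ver C \<and>
        vdom C ta = hdom C h \<and> vcod C ta = hdom C h' \<and>
        vdom C tb = hcod C h \<and> vcod C tb = hcod C h' \<and>
        vdom C tc = vcod C v \<and> vcod C tc = vcod C v' \<and>
        sq C h ta tb h' \<and> vcomp C v' ta = vcomp C tc v}),
     Cmp = (\<lambda>(a, b, c) (a', b', c'). (vcomp C a a', vcomp C b b', vcomp C c c')),
     Id = (\<lambda>(h, v). (vid C (hdom C h), vid C (hcod C h), vid C (vcod C v))) \<rparr>"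

text \<open>A double functor boxdot -> C is a square (t, l, r, b) of C
  (t : a >-> b, l : a ->> c, r : b ->> d, bottom b : c >-> d).
  A vertical transformation is (tau_a, tau_b, tau_c, tau_d).\<close>
definition square_cat :: "('o, 'h, 'v) dbl \<Rightarrow> ('h \<times> 'v \<times> 'v \<times> 'h, 'v \<times> 'v \<times> 'v \<times> 'v) cat" where
  "square_cat C = \<lparr> Ob = {(t, l, r, b). sq C t l r b},
     Hom = (\<lambda>(t, l, r, b) (t', l', r', b'). {(ta, tb, tc, td).
        ta \<in> ver C \<and> tb \<in> ver C \<and> tc \<in> ver C \<and> td \<in> ver C \<and>
        vdom C ta = hdom C t \<and> vcod C ta = hdom C t' \<and>
        vdom C tb = hcod C t \<and> vcod C tb = hcod C t' \<and>
        vdom C tc = hdom C b \<and> vcod C tc = hdom C b' \<and>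
        vdom C td = hcod C b \<and> vcod C td = hcod C b' \<and>
        sq C t ta tb t' \<and> sq C b tc td b' \<and>
        vcomp C l' ta = vcomp C tc l \<and> vcomp C r' tb = vcomp C td r}),
     Cmp = (\<lambda>(a, b, c, d) (a', b', c', d').
        (vcomp C a a', vcomp C b b', vcomp C c c', vcomp C d d')),
     Id = (\<lambda>(t, l, r, b). (vid C (hdom C t), vid C (hcod C t), vid C (hdom C b), vid C (hcod C b))) \<rparr>"

text \<open>A double functor cospan -> C is a pair (v, h) with v : b ->> d, h : c >-> d.
  A vertical transformation is (tau_b, tau_c, tau_d).\<close>
definition cospan_cat :: "('o, 'h, 'v) dbl \<Rightarrow> ('v \<times> 'h, 'v \<times> 'v \<times> 'v) cat" where
  "cospan_cat C = \<lparr> Ob = {(v, h). v \<in> ver C \<and> h \<in> hor C \<and> vcod C v = hcod C h},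
     Hom = (\<lambda>(v, h) (v', h'). {(tb, tc, td).
        tb \<in> ver C \<and> tc \<in> ver C \<and> td \<in> ver C \<and>
        vdom C tb = vdom C v \<and> vcod C tb = vdom C v' \<and>
        vdom C tc = hdom C h \<and> vcod C tc = hdom C h' \<and>
        vdom C td = vcod C v \<and> vcod C td = vcod C v' \<and>
        sq C h tc td h' \<and> vcomp C v' tb = vcomp C td v}),
     Cmp = (\<lambda>(b, c, d) (b', c', d'). (vcomp C b b', vcomp C c c', vcomp C d d')),
     Id = (\<lambda>(v, h). (vid C (vdom C v), vid C (hdom C h), vid C (vcod C v))) \<rparr>"

definition i_o :: "'h \<times> 'v \<times> 'v \<times> 'h \<Rightarrow> 'h \<times> 'v" where
  "i_o X = (case X of (t, l, r, b) \<Rightarrow> (t, l))"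
definition i_m :: "'x \<Rightarrow> 'x \<Rightarrow> 'v \<times> 'v \<times> 'v \<times> 'v \<Rightarrow> 'v \<times> 'v \<times> 'v" where
  "i_m X Y f = (case f of (a, b, c, d) \<Rightarrow> (a, b, c))"
definition j_o :: "'h \<times> 'v \<times> 'v \<times> 'h \<Rightarrow> 'v \<times> 'h" where
  "j_o X = (case X of (t, l, r, b) \<Rightarrow> (r, b))"
definition j_m :: "'x \<Rightarrow> 'x \<Rightarrow> 'v \<times> 'v \<times> 'v \<times> 'v \<Rightarrow> 'v \<times> 'v \<times> 'v" where
  "j_m X Y f = (case f of (a, b, c, d) \<Rightarrow> (b, c, d))"

definition stable :: "('o, 'h, 'v) dbl \<Rightarrow> 'o \<Rightarrow> bool" where
  "stable C Z \<longleftrightarrow> squares_cat C Z \<and>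
   \<comment> \<open>(i), (ii)\<close>
   (\<exists>so sm. is_functor (span_cat C) (square_cat C) so sm \<and>
      (\<forall>x\<in>Ob (span_cat C). i_o (so x) = x) \<and>
      (\<forall>x\<in>Ob (span_cat C). \<forall>y\<in>Ob (span_cat C). \<forall>f\<in>Hom (span_cat C) x y.
          i_m (so x) (so y) (sm x y f) = f) \<and>
      (\<exists>w. is_nat_trans (square_cat C) (square_cat C)
              (\<lambda>X. so (i_o X)) (\<lambda>X Y f. sm (i_o X) (i_o Y) (i_m X Y f))
              (\<lambda>X. X) (\<lambda>X Y f. f) w \<and>
           (\<forall>t l r b. sq C t l r b \<longrightarrow>
              (\<exists>d. w (t, l, r, b) = (vid C (hdom C t), vid C (hcod C t), vid C (hdom C b), d))))) \<and>
   \<comment> \<open>(iii), (iv)\<close>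
   (\<exists>to tm. is_functor (cospan_cat C) (square_cat C) to tm \<and>
      (\<forall>x\<in>Ob (cospan_cat C). j_o (to x) = x) \<and>
      (\<forall>x\<in>Ob (cospan_cat C). \<forall>y\<in>Ob (cospan_cat C). \<forall>f\<in>Hom (cospan_cat C) x y.
          j_m (to x) (to y) (tm x y f) = f) \<and>
      (\<exists>u. is_nat_trans (square_cat C) (square_cat C)
              (\<lambda>X. to (j_o X)) (\<lambda>X Y f. tm (j_o X) (j_o Y) (j_m X Y f))
              (\<lambda>X. X) (\<lambda>X Y f. f) u \<and>
           (\<forall>t l r b. sq C t l r b \<longrightarrow>
              (\<exists>a. vweq C Z a \<and>
                   u (t, l, r, b) = (a, vid C (hcod C t), vid C (hdom C b), vid C (hcod C b))))))"

definition isostable :: "('o, 'h, 'v) dbl \<Rightarrow> 'o \<Rightarrow> bool" where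
  "isostable C Z \<longleftrightarrow> stable C Z \<and>
     (\<forall>f. vweq C Z f \<longrightarrow> (\<exists>g. v_inverse C f g)) \<and>
     (\<forall>f. hweq C Z f \<longrightarrow> (\<exists>g. h_inverse C f g)) \<and>
     (\<forall>f k g g' h h'. f \<in> hor C \<longrightarrow> k \<in> hor C \<longrightarrow> v_inverse C g g' \<longrightarrow> v_inverse C h h' \<longrightarrow>
        vdom C g = hdom C f \<longrightarrow> vcod C g = hdom C k \<longrightarrow>
        vdom C h = hcod C f \<longrightarrow> vcod C h = hcod C k \<longrightarrow>
        (sq C f g h k \<longleftrightarrow> sq C k g' h' f))"

section \<open>The categories S^square_n C and V_n C, and the forgetful functor U_n\<close>

text \<open>All families are extensional (undefined outside the index range) so that
  objects/morphisms are uniquely represented.\<close>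
definition Sn_obj :: "('o, 'h, 'v) dbl \<Rightarrow> 'o \<Rightarrow> nat \<Rightarrow>
     ((nat \<Rightarrow> nat \<Rightarrow> 'o) \<times> (nat \<Rightarrow> nat \<Rightarrow> 'h) \<times> (nat \<Rightarrow> nat \<Rightarrow> 'v)) set" where
  "Sn_obj C Z n = {(A, hA, vA).
     (\<forall>j k. \<not> (j \<le> k \<and> k \<le> n) \<longrightarrow> A j k = undefined) \<and>
     (\<forall>j k. \<not> (j \<le> k \<and> k < n) \<longrightarrow> hA j k = undefined) \<and>
     (\<forall>j k. \<not> (j < k \<and> k \<le> n) \<longrightarrow> vA j k = undefined) \<and>
     (\<forall>j\<le>n. A j j = Z) \<and>
     (\<forall>j k. j \<le> k \<and> k \<le> n \<longrightarrow> A j k \<in> obj C) \<and>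
     (\<forall>j k. j \<le> k \<and> k < n \<longrightarrow>
        hA j k \<in> hor C \<and> hdom C (hA j k) = A j k \<and> hcod C (hA j k) = A j (k + 1)) \<and>
     (\<forall>j k. j < k \<and> k \<le> n \<longrightarrow>
        vA j k \<in> ver C \<and> vdom C (vA j k) = A j k \<and> vcod C (vA j k) = A (j + 1) k) \<and>
     (\<forall>j k. j < k \<and> k < n \<longrightarrow> sq C (hA j k) (vA j k) (vA j (k + 1)) (hA (j + 1) k))}"

definition Sn_hom :: "('o, 'h, 'v) dbl \<Rightarrow> 'o \<Rightarrow> nat \<Rightarrow>
     ((nat \<Rightarrow> nat \<Rightarrow> 'o) \<times> (nat \<Rightarrow> nat \<Rightarrow> 'h) \<times> (nat \<Rightarrow> nat \<Rightarrow> 'v)) \<Rightarrow>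
     ((nat \<Rightarrow> nat \<Rightarrow> 'o) \<times> (nat \<Rightarrow> nat \<Rightarrow> 'h) \<times> (nat \<Rightarrow> nat \<Rightarrow> 'v)) \<Rightarrow>
     (nat \<Rightarrow> nat \<Rightarrow> 'v) set" where
  "Sn_hom C Z n X Y = (case X of (A, hA, vA) \<Rightarrow> case Y of (A', hA', vA') \<Rightarrow> {f.
     (\<forall>j k. \<not> (j \<le> k \<and> k \<le> n) \<longrightarrow> f j k = undefined) \<and>
     (\<forall>j k. j \<le> k \<and> k \<le> n \<longrightarrow>
        f j k \<in> ver C \<and> vdom C (f j k) = A j k \<and> vcod C (f j k) = A' j k \<and> vweq C Z (f j k)) \<and>
     (\<forall>j k. j \<le> k \<and> k < n \<longrightarrow> sq C (hA j k) (f j k) (f j (k + 1)) (hA' j k)) \<and>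
     (\<forall>j k. j < k \<and> k \<le> n \<longrightarrow> vcomp C (vA' j k) (f j k) = vcomp C (f (j + 1) k) (vA j k))})"

definition Sn_cat :: "('o, 'h, 'v) dbl \<Rightarrow> 'o \<Rightarrow> nat \<Rightarrow>
     ((nat \<Rightarrow> nat \<Rightarrow> 'o) \<times> (nat \<Rightarrow> nat \<Rightarrow> 'h) \<times> (nat \<Rightarrow> nat \<Rightarrow> 'v), nat \<Rightarrow> nat \<Rightarrow> 'v) cat" where
  "Sn_cat C Z n = \<lparr> Ob = Sn_obj C Z n, Hom = Sn_hom C Z n,
     Cmp = (\<lambda>g f j k. if j \<le> k \<and> k \<le> n then vcomp C (g j k) (f j k) else undefined),
     Id = (\<lambda>(A, hA, vA) j k. if j \<le> k \<and> k \<le> n then vid C (A j k) else undefined) \<rparr>"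

definition Vn_obj :: "('o, 'h, 'v) dbl \<Rightarrow> 'o \<Rightarrow> nat \<Rightarrow> ((nat \<Rightarrow> 'o) \<times> (nat \<Rightarrow> 'v)) set" where
  "Vn_obj C Z n = {(a, p).
     (\<forall>i. \<not> (1 \<le> i \<and> i \<le> n) \<longrightarrow> a i = undefined \<and> p i = undefined) \<and>
     (\<forall>i. 1 \<le> i \<and> i \<le> n \<longrightarrow> a i \<in> obj C \<and> p i \<in> ver C \<and> vdom C (p i) = a i) \<and>
     (\<forall>i. 1 \<le> i \<and> i < n \<longrightarrow> vcod C (p i) = a (i + 1)) \<and>
     (1 \<le> n \<longrightarrow> vcod C (p n) = Z)}"

definition Vn_hom :: "('o, 'h, 'v) dbl \<Rightarrow> 'o \<Rightarrow> nat \<Rightarrow>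
     ((nat \<Rightarrow> 'o) \<times> (nat \<Rightarrow> 'v)) \<Rightarrow> ((nat \<Rightarrow> 'o) \<times> (nat \<Rightarrow> 'v)) \<Rightarrow> (nat \<Rightarrow> 'v) set" where
  "Vn_hom C Z n X Y = (case X of (a, p) \<Rightarrow> case Y of (a', p') \<Rightarrow> {g.
     (\<forall>i. \<not> (1 \<le> i \<and> i \<le> n) \<longrightarrow> g i = undefined) \<and>
     (\<forall>i. 1 \<le> i \<and> i \<le> n \<longrightarrow>
        g i \<in> ver C \<and> vdom C (g i) = a i \<and> vcod C (g i) = a' i \<and> vweq C Z (g i)) \<and>
     (\<forall>i. 1 \<le> i \<and> i < n \<longrightarrow> vcomp C (p' i) (g i) = vcomp C (g (i + 1)) (p i)) \<and>
     (1 \<le> n \<longrightarrow> vcomp C (p' n) (g n) = vcomp C (vid C Z) (p n))})"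

definition Vn_cat :: "('o, 'h, 'v) dbl \<Rightarrow> 'o \<Rightarrow> nat \<Rightarrow> ((nat \<Rightarrow> 'o) \<times> (nat \<Rightarrow> 'v), nat \<Rightarrow> 'v) cat" where
  "Vn_cat C Z n = \<lparr> Ob = Vn_obj C Z n, Hom = Vn_hom C Z n,
     Cmp = (\<lambda>g f i. if 1 \<le> i \<and> i \<le> n then vcomp C (g i) (f i) else undefined),
     Id = (\<lambda>(a, p) i. if 1 \<le> i \<and> i \<le> n then vid C (a i) else undefined) \<rparr>"

definition Un_o :: "nat \<Rightarrow> (nat \<Rightarrow> nat \<Rightarrow> 'o) \<times> (nat \<Rightarrow> nat \<Rightarrow> 'h) \<times> (nat \<Rightarrow> nat \<Rightarrow> 'v)
     \<Rightarrow> (nat \<Rightarrow> 'o) \<times> (nat \<Rightarrow> 'v)" where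
  "Un_o n X = (case X of (A, hA, vA) \<Rightarrow>
     (\<lambda>i. if 1 \<le> i \<and> i \<le> n then A (i - 1) n else undefined,
      \<lambda>i. if 1 \<le> i \<and> i \<le> n then vA (i - 1) n else undefined))"

definition Un_m :: "nat \<Rightarrow> 'x \<Rightarrow> 'x \<Rightarrow> (nat \<Rightarrow> nat \<Rightarrow> 'v) \<Rightarrow> nat \<Rightarrow> 'v" where
  "Un_m n X Y f = (\<lambda>i. if 1 \<le> i \<and> i \<le> n then f (i - 1) n else undefined)"

end

theory Submission
  imports Defs
begin

lemma equiv_from_ff:
  assumes F: "is_functor C D Fo Fm"
    and CId: "\<And>X. X \<in> Ob C \<Longrightarrow> Id C X \<in> Hom C X X"
    and CCmp: "\<And>X Y W f g. X \<in> Ob C \<Longrightarrow> Y \<in> Ob C \<Longrightarrow> W \<in> Ob C \<Longrightarrow> f \<in> Hom C X Y \<Longrightarrow> g \<in> Hom C Y W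
                 \<Longrightarrow> Cmp C g f \<in> Hom C X W"
    and DId: "\<And>Y. Y \<in> Ob D \<Longrightarrow> Id D Y \<in> Hom D Y Y"
    and Dl: "\<And>X Y f. X \<in> Ob D \<Longrightarrow> Y \<in> Ob D \<Longrightarrow> f \<in> Hom D X Y \<Longrightarrow> Cmp D (Id D Y) f = f"
    and Dr: "\<And>X Y f. X \<in> Ob D \<Longrightarrow> Y \<in> Ob D \<Longrightarrow> f \<in> Hom D X Y \<Longrightarrow> Cmp D f (Id D X) = f"
    and surj: "\<And>Y. Y \<in> Ob D \<Longrightarrow> \<exists>X\<in>Ob C. Fo X = Y"
    and full: "\<And>X X' g. X \<in> Ob C \<Longrightarrow> X' \<in> Ob C \<Longrightarrow> g \<in> Hom D (Fo X) (Fo X') \<Longrightarrow> \<exists>f\<in>Hom C X X'. Fm X X' f = g"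
    and faith: "\<And>X X' f f'. X \<in> Ob C \<Longrightarrow> X' \<in> Ob C \<Longrightarrow> f \<in> Hom C X X' \<Longrightarrow> f' \<in> Hom C X X' \<Longrightarrow>
                   Fm X X' f = Fm X X' f' \<Longrightarrow> f = f'"
  shows "is_equivalence C D Fo Fm"
proof -
  have Fo: "\<And>X. X \<in> Ob C \<Longrightarrow> Fo X \<in> Ob D" using F unfolding is_functor_def by blast
  have Fm: "\<And>X Y f. X \<in> Ob C \<Longrightarrow> Y \<in> Ob C \<Longrightarrow> f \<in> Hom C X Y \<Longrightarrow> Fm X Y f \<in> Hom D (Fo X) (Fo Y)"
    using F unfolding is_functor_def by blast
  have FId: "\<And>X. X \<in> Ob C \<Longrightarrow> Fm X X (Id C X) = Id D (Fo X)" using F unfolding is_functor_def by blast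
  have FCmp: "\<And>X Y W f g. X \<in> Ob C \<Longrightarrow> Y \<in> Ob C \<Longrightarrow> W \<in> Ob C \<Longrightarrow> f \<in> Hom C X Y \<Longrightarrow> g \<in> Hom C Y W
        \<Longrightarrow> Fm X W (Cmp C g f) = Cmp D (Fm Y W g) (Fm X Y f)" using F unfolding is_functor_def by blast
  define Go where "Go Y = (SOME X. X \<in> Ob C \<and> Fo X = Y)" for Y
  have Go: "\<And>Y. Y \<in> Ob D \<Longrightarrow> Go Y \<in> Ob C \<and> Fo (Go Y) = Y"
    unfolding Go_def using surj by (metis (mono_tags, lifting) someI_ex)
  define Gm where "Gm Y Y' g = (SOME f. f \<in> Hom C (Go Y) (Go Y') \<and> Fm (Go Y) (Go Y') f = g)" for Y Y' g
  have Gm: "\<And>Y Y' g. Y \<in> Ob D \<Longrightarrow> Y' \<in> Ob D \<Longrightarrow> g \<in> Hom D Y Y' \<Longrightarrow>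
      Gm Y Y' g \<in> Hom C (Go Y) (Go Y') \<and> Fm (Go Y) (Go Y') (Gm Y Y' g) = g"
  proof -
    fix Y Y' g assume a: "Y \<in> Ob D" "Y' \<in> Ob D" "g \<in> Hom D Y Y'"
    then have "\<exists>f. f \<in> Hom C (Go Y) (Go Y') \<and> Fm (Go Y) (Go Y') f = g" using full[of "Go Y" "Go Y'" g] Go by auto
    then show "Gm Y Y' g \<in> Hom C (Go Y) (Go Y') \<and> Fm (Go Y) (Go Y') (Gm Y Y' g) = g"
      unfolding Gm_def by (rule someI_ex)
  qed
  define eta where "eta X = (SOME f. f \<in> Hom C X (Go (Fo X)) \<and> Fm X (Go (Fo X)) f = Id D (Fo X))" for X
  have eta: "\<And>X. X \<in> Ob C \<Longrightarrow> eta X \<in> Hom C X (Go (Fo X)) \<and> Fm X (Go (Fo X)) (eta X) = Id D (Fo X)"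
  proof -
    fix X assume a: "X \<in> Ob C"
    then have "\<exists>f. f \<in> Hom C X (Go (Fo X)) \<and> Fm X (Go (Fo X)) f = Id D (Fo X)"
      using full[of X "Go (Fo X)" "Id D (Fo X)"] Go[OF Fo[OF a]] DId[OF Fo[OF a]] by auto
    then show "eta X \<in> Hom C X (Go (Fo X)) \<and> Fm X (Go (Fo X)) (eta X) = Id D (Fo X)"
      unfolding eta_def by (rule someI_ex)
  qed
  have GF: "is_functor D C Go Gm"
    unfolding is_functor_def
  proof (intro conjI ballI)
    fix X assume "X \<in> Ob D" then show "Go X \<in> Ob C" using Go by blast
  next
    fix X Y f assume "X \<in> Ob D" "Y \<in> Ob D" "f \<in> Hom D X Y" then show "Gm X Y f \<in> Hom C (Go X) (Go Y)" using Gm by blast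
  next
    fix X assume X: "X \<in> Ob D"
    show "Gm X X (Id D X) = Id C (Go X)"
      apply (rule faith[of "Go X" "Go X"])
      using Go[OF X] Gm[OF X X DId[OF X]] CId FId by auto
  next
    fix X Y W f g assume a: "X \<in> Ob D" "Y \<in> Ob D" "W \<in> Ob D" "f \<in> Hom D X Y" "g \<in> Hom D Y W"
    note gx = Go[OF a(1)] and gy = Go[OF a(2)] and gw = Go[OF a(3)]
    note mf = Gm[OF a(1) a(2) a(4)] and mg = Gm[OF a(2) a(3) a(5)]
    have c: "Cmp C (Gm Y W g) (Gm X Y f) \<in> Hom C (Go X) (Go W)" using CCmp gx gy gw mf mg by blast
    have fc: "Fm (Go X) (Go W) (Cmp C (Gm Y W g) (Gm X Y f)) = Cmp D g f"
      using FCmp[of "Go X" "Go Y" "Go W" "Gm X Y f" "Gm Y W g"] gx gy gw mf mg by auto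
    have "Cmp D g f \<in> Hom D X W" using Fm[of "Go X" "Go W"] c fc gx gw by metis
    then have m: "Gm X W (Cmp D g f) \<in> Hom C (Go X) (Go W) \<and> Fm (Go X) (Go W) (Gm X W (Cmp D g f)) = Cmp D g f"
      using Gm a by blast
    show "Gm X W (Cmp D g f) = Cmp C (Gm Y W g) (Gm X Y f)"
      apply (rule faith[of "Go X" "Go W"]) using gx gw m c fc by auto
  qed
  have N1: "is_nat_trans C C (\<lambda>X. X) (\<lambda>X Y f. f) (\<lambda>X. Go (Fo X)) (\<lambda>X Y f. Gm (Fo X) (Fo Y) (Fm X Y f)) eta"
    unfolding is_nat_trans_def
  proof (intro conjI ballI)
    fix X assume "X \<in> Ob C" then show "eta X \<in> Hom C X (Go (Fo X))" using eta by blast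
  next
    fix X Y f assume a: "X \<in> Ob C" "Y \<in> Ob C" "f \<in> Hom C X Y"
    note fx = Fo[OF a(1)] and fy = Fo[OF a(2)]
    note gx = Go[OF fx] and gy = Go[OF fy]
    have fm: "Fm X Y f \<in> Hom D (Fo X) (Fo Y)" using Fm a by blast
    note gm = Gm[OF fx fy fm]
    have c1: "Cmp C (eta Y) f \<in> Hom C X (Go (Fo Y))" using CCmp a eta gy by blast
    have c2: "Cmp C (Gm (Fo X) (Fo Y) (Fm X Y f)) (eta X) \<in> Hom C X (Go (Fo Y))" using CCmp a eta gx gy gm by blast
    have "Fm X (Go (Fo Y)) (Cmp C (eta Y) f) = Fm X Y f"
      using FCmp[of X Y "Go (Fo Y)" f "eta Y"] a eta gy Dl[OF fx fy fm] by auto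
    moreover have "Fm X (Go (Fo Y)) (Cmp C (Gm (Fo X) (Fo Y) (Fm X Y f)) (eta X)) = Fm X Y f"
      using FCmp[of X "Go (Fo X)" "Go (Fo Y)" "eta X" "Gm (Fo X) (Fo Y) (Fm X Y f)"] a eta gx gy gm Dr[OF fx fy fm] by auto
    ultimately show "Cmp C (eta Y) f = Cmp C (Gm (Fo X) (Fo Y) (Fm X Y f)) (eta X)"
      using faith[OF a(1) _ c1 c2] gy by auto
  qed
  have I1: "\<forall>X\<in>Ob C. is_iso C X (Go (Fo X)) (eta X)"
  proof
    fix X assume a: "X \<in> Ob C"
    note fx = Fo[OF a] note gx = Go[OF fx]
    obtain th where th: "th \<in> Hom C (Go (Fo X)) X" "Fm (Go (Fo X)) X th = Id D (Fo X)"
      using full[of "Go (Fo X)" X "Id D (Fo X)"] gx a DId[OF fx] by auto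
    have e: "eta X \<in> Hom C X (Go (Fo X))" "Fm X (Go (Fo X)) (eta X) = Id D (Fo X)" using eta a by auto
    have ii: "Cmp D (Id D (Fo X)) (Id D (Fo X)) = Id D (Fo X)" using Dl[OF fx fx DId[OF fx]] .
    have "Cmp C th (eta X) = Id C X"
      apply (rule faith[of X X])
      using a gx CCmp[of X "Go (Fo X)" X "eta X" th] e th CId FId FCmp[of X "Go (Fo X)" X "eta X" th] ii by auto
    moreover have "Cmp C (eta X) th = Id C (Go (Fo X))"
      apply (rule faith[of "Go (Fo X)" "Go (Fo X)"])
      using a gx CCmp[of "Go (Fo X)" X "Go (Fo X)" th "eta X"] e th CId FId FCmp[of "Go (Fo X)" X "Go (Fo X)" th "eta X"] ii by auto
    ultimately show "is_iso C X (Go (Fo X)) (eta X)" unfolding is_iso_def using e th by blast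
  qed
  have N2: "is_nat_trans D D (\<lambda>Y. Fo (Go Y)) (\<lambda>Y Y' g. Fm (Go Y) (Go Y') (Gm Y Y' g)) (\<lambda>Y. Y) (\<lambda>Y Y' g. g) (Id D)"
    unfolding is_nat_trans_def
  proof (intro conjI ballI)
    fix X assume "X \<in> Ob D" then show "Id D X \<in> Hom D (Fo (Go X)) X" using Go DId by auto
  next
    fix X Y f assume a: "X \<in> Ob D" "Y \<in> Ob D" "f \<in> Hom D X Y"
    show "Cmp D (Id D Y) (Fm (Go X) (Go Y) (Gm X Y f)) = Cmp D f (Id D X)"
      using Gm[OF a] Dl[OF a] Dr[OF a] by auto
  qed
  have I2: "\<forall>Y\<in>Ob D. is_iso D (Fo (Go Y)) Y (Id D Y)"
    unfolding is_iso_def using Go DId Dl by fastforce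
  show ?thesis unfolding is_equivalence_def using F GF N1 I1 N2 I2 by blast
qed

locale isoC =
  fixes C :: "('o,'h,'v) dbl" and Z :: 'o
  assumes iso: "isostable C Z"
begin

lemma stab: "stable C Z" using iso unfolding isostable_def by blast
lemma sqc: "squares_cat C Z" using stab unfolding stable_def by blast
lemma flat: "flat_double_cat C" using sqc unfolding squares_cat_def by blast
lemma Zobj: "Z \<in> obj C" using sqc unfolding squares_cat_def by blast

lemmas fl0 = flat[unfolded flat_double_cat_def]
lemmas c1 = fl0[THEN conjunct1]
lemmas r1 = fl0[THEN conjunct2]
lemmas c2 = r1[THEN conjunct1]
lemmas r2 = r1[THEN conjunct2]
lemmas c3 = r2[THEN conjunct1]
lemmas r3 = r2[THEN conjunct2]
lemmas c4 = r3[THEN conjunct1]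
lemmas r4 = r3[THEN conjunct2]
lemmas c5 = r4[THEN conjunct1]
lemmas r5 = r4[THEN conjunct2]
lemmas c6 = r5[THEN conjunct1]
lemmas r6 = r5[THEN conjunct2]
lemmas c7 = r6[THEN conjunct1]
lemmas r7 = r6[THEN conjunct2]
lemmas c8 = r7[THEN conjunct1]
lemmas r8 = r7[THEN conjunct2]
lemmas c9 = r8[THEN conjunct1]
lemmas r9 = r8[THEN conjunct2]
lemmas c10 = r9[THEN conjunct1]
lemmas r10 = r9[THEN conjunct2]
lemmas c11 = r10[THEN conjunct1]
lemmas r11 = r10[THEN conjunct2]
lemmas c12 = r11[THEN conjunct1]
lemmas r12 = r11[THEN conjunct2]
lemmas c13 = r12[THEN conjunct1]
lemmas r13 = r12[THEN conjunct2]
lemmas c14 = r13[THEN conjunct1]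
lemmas r14 = r13[THEN conjunct2]
lemmas c15 = r14

lemma hor_dom: "f \<in> hor C \<Longrightarrow> hdom C f \<in> obj C" using c1 by blast
lemma hor_cod: "f \<in> hor C \<Longrightarrow> hcod C f \<in> obj C" using c1 by blast
lemma ver_dom: "f \<in> ver C \<Longrightarrow> vdom C f \<in> obj C" using c6 by blast
lemma ver_cod: "f \<in> ver C \<Longrightarrow> vcod C f \<in> obj C" using c6 by blast
lemma hid: "A \<in> obj C \<Longrightarrow> hid C A \<in> hor C \<and> hdom C (hid C A) = A \<and> hcod C (hid C A) = A"
  using c2 by blast
lemma vid: "A \<in> obj C \<Longrightarrow> vid C A \<in> ver C \<and> vdom C (vid C A) = A \<and> vcod C (vid C A) = A"
  using c7 by blast
lemma hcomp: "f \<in> hor C \<Longrightarrow> g \<in> hor C \<Longrightarrow> hcod C f = hdom C g \<Longrightarrow>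
      hcomp C g f \<in> hor C \<and> hdom C (hcomp C g f) = hdom C f \<and> hcod C (hcomp C g f) = hcod C g"
  using c3 by blast
lemma vcomp: "f \<in> ver C \<Longrightarrow> g \<in> ver C \<Longrightarrow> vcod C f = vdom C g \<Longrightarrow>
      vcomp C g f \<in> ver C \<and> vdom C (vcomp C g f) = vdom C f \<and> vcod C (vcomp C g f) = vcod C g"
  using c8 by blast
lemma vid_r: "f \<in> ver C \<Longrightarrow> vcomp C f (vid C (vdom C f)) = f"
  using c9 by blast
lemma vid_l: "f \<in> ver C \<Longrightarrow> vcomp C (vid C (vcod C f)) f = f"
  using c9 by blast
lemma vassoc: "f \<in> ver C \<Longrightarrow> g \<in> ver C \<Longrightarrow> k \<in> ver C \<Longrightarrow> vcod C f = vdom C g \<Longrightarrow> vcod C g = vdom C k \<Longrightarrow>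
      vcomp C k (vcomp C g f) = vcomp C (vcomp C k g) f"
  using c10 by blast
lemma sq_wf: "sq C t l r b \<Longrightarrow> t \<in> hor C \<and> b \<in> hor C \<and> l \<in> ver C \<and> r \<in> ver C \<and>
      vdom C l = hdom C t \<and> vdom C r = hcod C t \<and> vcod C l = hdom C b \<and> vcod C r = hcod C b"
  using c11 by blast
lemma sq_hidsq: "h \<in> hor C \<Longrightarrow> sq C h (vid C (hdom C h)) (vid C (hcod C h)) h"
  using c13 by blast
lemma sq_hc: "sq C t l m b \<Longrightarrow> sq C t' m r b' \<Longrightarrow> sq C (hcomp C t' t) l r (hcomp C b' b)"
  using c14 by blast
lemma sq_vc: "sq C t l r m \<Longrightarrow> sq C m l' r' b \<Longrightarrow> sq C t (vcomp C l' l) (vcomp C r' r) b"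
  using c15 by blast

lemma hinit: "A \<in> obj C \<Longrightarrow> hinit C Z A \<in> hor C \<and> hdom C (hinit C Z A) = Z \<and> hcod C (hinit C Z A) = A"
proof -
  assume A: "A \<in> obj C"
  then have "\<exists>!h. h \<in> hor C \<and> hdom C h = Z \<and> hcod C h = A" using sqc unfolding squares_cat_def by blast
  then show ?thesis unfolding hinit_def by (rule theI')
qed

lemma hinit_eq: "h \<in> hor C \<Longrightarrow> hdom C h = Z \<Longrightarrow> hcod C h = A \<Longrightarrow> h = hinit C Z A"
proof -
  assume h: "h \<in> hor C" "hdom C h = Z" "hcod C h = A"
  then have A: "A \<in> obj C" using hor_cod by blast
  then have "\<exists>!h. h \<in> hor C \<and> hdom C h = Z \<and> hcod C h = A" using sqc unfolding squares_cat_def by blast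
  then show ?thesis unfolding hinit_def using h by (metis (mono_tags, lifting) the_equality)
qed

lemma vZ_eq: "v \<in> ver C \<Longrightarrow> vcod C v = Z \<Longrightarrow> v' \<in> ver C \<Longrightarrow> vdom C v' = vdom C v \<Longrightarrow> vcod C v' = Z \<Longrightarrow> v' = v"
proof -
  assume v: "v \<in> ver C" "vcod C v = Z" "v' \<in> ver C" "vdom C v' = vdom C v" "vcod C v' = Z"
  then have "vdom C v \<in> obj C" using ver_dom by blast
  then have "\<exists>!w. w \<in> ver C \<and> vdom C w = vdom C v \<and> vcod C w = Z" using sqc unfolding squares_cat_def by blast
  then show ?thesis using v by blast
qed

lemma vidZ_eq: "v \<in> ver C \<Longrightarrow> vdom C v = Z \<Longrightarrow> vcod C v = Z \<Longrightarrow> v = vid C Z"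
  using vZ_eq[of "vid C Z" v] vid[OF Zobj] by auto

lemma vweq_vid: "A \<in> obj C \<Longrightarrow> vweq C Z (vid C A)"
  unfolding vweq_def using vid[of A] hinit[of A] sq_hidsq[of "hinit C Z A"] by auto

lemma vweq_comp: "vweq C Z f \<Longrightarrow> vweq C Z g \<Longrightarrow> vcod C f = vdom C g \<Longrightarrow> vweq C Z (vcomp C g f)"
proof -
  assume f: "vweq C Z f" and g: "vweq C Z g" and c: "vcod C f = vdom C g"
  have fv: "f \<in> ver C" and gv: "g \<in> ver C" using f g unfolding vweq_def by auto
  have "sq C (hinit C Z (vdom C f)) (vcomp C (vid C Z) (vid C Z)) (vcomp C g f) (hinit C Z (vcod C g))"
    using sq_vc f g c unfolding vweq_def by metis
  moreover have "vcomp C (vid C Z) (vid C Z) = vid C Z" using vid_l[of "vid C Z"] vid[OF Zobj] by auto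
  ultimately show ?thesis unfolding vweq_def using vcomp[OF fv gv c] by auto
qed

lemma transport: "f \<in> hor C \<Longrightarrow> k \<in> hor C \<Longrightarrow> v_inverse C g g' \<Longrightarrow> v_inverse C h h' \<Longrightarrow>
        vdom C g = hdom C f \<Longrightarrow> vcod C g = hdom C k \<Longrightarrow>
        vdom C h = hcod C f \<Longrightarrow> vcod C h = hcod C k \<Longrightarrow> sq C f g h k \<Longrightarrow> sq C k g' h' f"
  using iso unfolding isostable_def by blast

lemma vinv_vid: "A \<in> obj C \<Longrightarrow> v_inverse C (vid C A) (vid C A)"
  unfolding v_inverse_def using vid[of A] vid_l[of "vid C A"] by auto

lemma vweq_inv: "vweq C Z f \<Longrightarrow> \<exists>g. v_inverse C f g \<and> vweq C Z g"
proof -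
  assume f: "vweq C Z f"
  obtain g where g: "v_inverse C f g" using iso f unfolding isostable_def by blast
  have fv: "f \<in> ver C" using f unfolding vweq_def by auto
  have s: "sq C (hinit C Z (vdom C f)) (vid C Z) f (hinit C Z (vcod C f))" using f unfolding vweq_def by auto
  have "sq C (hinit C Z (vcod C f)) (vid C Z) g (hinit C Z (vdom C f))"
    apply (rule transport[OF _ _ vinv_vid[OF Zobj] g _ _ _ _ s])
    using hinit ver_dom ver_cod fv vid Zobj by auto
  then show ?thesis using g unfolding vweq_def v_inverse_def by auto
qed


lemma stabJ: "\<exists>to tm u. is_functor (cospan_cat C) (square_cat C) to tm \<and>
      (\<forall>x\<in>Ob (cospan_cat C). j_o (to x) = x) \<and>
      (\<forall>x\<in>Ob (cospan_cat C). \<forall>y\<in>Ob (cospan_cat C). \<forall>f\<in>Hom (cospan_cat C) x y.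
          j_m (to x) (to y) (tm x y f) = f) \<and>
      is_nat_trans (square_cat C) (square_cat C)
              (\<lambda>X. to (j_o X)) (\<lambda>X Y f. tm (j_o X) (j_o Y) (j_m X Y f))
              (\<lambda>X. X) (\<lambda>X Y f. f) u \<and>
           (\<forall>t l r b. sq C t l r b \<longrightarrow>
              (\<exists>a. vweq C Z a \<and>
                   u (t, l, r, b) = (a, vid C (hcod C t), vid C (hdom C b), vid C (hcod C b))))"
  using stab unfolding stable_def by blast

lemma sq_obj: "(t,l,r,b) \<in> Ob (square_cat C) \<longleftrightarrow> sq C t l r b"
  by (simp add: square_cat_def)

lemma sq_hom: "(ta,tb,tc,td) \<in> Hom (square_cat C) (t,l,r,b) (t',l',r',b') \<longleftrightarrow>
        ta \<in> ver C \<and> tb \<in> ver C \<and> tc \<in> ver C \<and> td \<in> ver C \<and>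
        vdom C ta = hdom C t \<and> vcod C ta = hdom C t' \<and>
        vdom C tb = hcod C t \<and> vcod C tb = hcod C t' \<and>
        vdom C tc = hdom C b \<and> vcod C tc = hdom C b' \<and>
        vdom C td = hcod C b \<and> vcod C td = hcod C b' \<and>
        sq C t ta tb t' \<and> sq C b tc td b' \<and>
        vcomp C l' ta = vcomp C tc l \<and> vcomp C r' tb = vcomp C td r"
  by (simp add: square_cat_def)

lemma sq_cmp: "Cmp (square_cat C) (a,b,c,d) (a',b',c',d') = (vcomp C a a', vcomp C b b', vcomp C c c', vcomp C d d')"
  by (simp add: square_cat_def)

lemma co_obj: "(v,h) \<in> Ob (cospan_cat C) \<longleftrightarrow> v \<in> ver C \<and> h \<in> hor C \<and> vcod C v = hcod C h"
  by (simp add: cospan_cat_def)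

lemma co_hom: "(tb,tc,td) \<in> Hom (cospan_cat C) (v,h) (v',h') \<longleftrightarrow>
        tb \<in> ver C \<and> tc \<in> ver C \<and> td \<in> ver C \<and>
        vdom C tb = vdom C v \<and> vcod C tb = vdom C v' \<and>
        vdom C tc = hdom C h \<and> vcod C tc = hdom C h' \<and>
        vdom C td = vcod C v \<and> vcod C td = vcod C v' \<and>
        sq C h tc td h' \<and> vcomp C v' tb = vcomp C td v"
  by (simp add: cospan_cat_def)

lemma to_shape:
  assumes toF: "is_functor (cospan_cat C) (square_cat C) to tm"
    and tosec: "\<forall>x\<in>Ob (cospan_cat C). j_o (to x) = x"
    and v: "v \<in> ver C" "h \<in> hor C" "vcod C v = hcod C h"
  obtains t l where "to (v,h) = (t,l,v,h)" "sq C t l v h"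
proof -
  have o: "(v,h) \<in> Ob (cospan_cat C)" using v co_obj by blast
  then have "to (v,h) \<in> Ob (square_cat C)" using toF unfolding is_functor_def by blast
  moreover obtain t l r b where e: "to (v,h) = (t,l,r,b)" by (cases "to (v,h)") auto
  moreover have "j_o (to (v,h)) = (v,h)" using tosec o by blast
  ultimately show ?thesis using that by (auto simp: j_o_def sq_obj)
qed

lemma filler: "v \<in> ver C \<Longrightarrow> h \<in> hor C \<Longrightarrow> vcod C v = hcod C h \<Longrightarrow> \<exists>t l. sq C t l v h"
proof -
  assume v: "v \<in> ver C" "h \<in> hor C" "vcod C v = hcod C h"
  obtain to tm u where toF: "is_functor (cospan_cat C) (square_cat C) to tm"
    and tosec: "\<forall>x\<in>Ob (cospan_cat C). j_o (to x) = x" using stabJ by blast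
  show ?thesis using to_shape[OF toF tosec v] by metis
qed

lemma u_at:
  assumes unat: "is_nat_trans (square_cat C) (square_cat C)
              (\<lambda>X. to (j_o X)) (\<lambda>X Y f. tm (j_o X) (j_o Y) (j_m X Y f))
              (\<lambda>X. X) (\<lambda>X Y f. f) u"
    and ucomp: "\<forall>t l r b. sq C t l r b \<longrightarrow>
              (\<exists>a. vweq C Z a \<and>
                   u (t, l, r, b) = (a, vid C (hcod C t), vid C (hdom C b), vid C (hcod C b)))"
    and toe: "to (r,b) = (t0,l0,r,b)"
    and s: "sq C t l r b"
  obtains a where "vweq C Z a" "u (t,l,r,b) = (a, vid C (hcod C t), vid C (hdom C b), vid C (hcod C b))"
    "(a, vid C (hcod C t), vid C (hdom C b), vid C (hcod C b)) \<in> Hom (square_cat C) (t0,l0,r,b) (t,l,r,b)"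
proof -
  obtain a where a: "vweq C Z a" "u (t,l,r,b) = (a, vid C (hcod C t), vid C (hdom C b), vid C (hcod C b))"
    using ucomp s by blast
  have "u (t,l,r,b) \<in> Hom (square_cat C) (to (j_o (t,l,r,b))) (t,l,r,b)"
    using unat s unfolding is_nat_trans_def by (auto simp: sq_obj)
  then show ?thesis using that a toe by (auto simp: j_o_def)
qed

lemma vweq_left:
  assumes s: "sq C T L v h" and vw: "vweq C Z v"
  shows "vweq C Z L"
proof -
  obtain to tm u where toF: "is_functor (cospan_cat C) (square_cat C) to tm"
    and tosec: "\<forall>x\<in>Ob (cospan_cat C). j_o (to x) = x"
    and unat: "is_nat_trans (square_cat C) (square_cat C)
              (\<lambda>X. to (j_o X)) (\<lambda>X Y f. tm (j_o X) (j_o Y) (j_m X Y f))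
              (\<lambda>X. X) (\<lambda>X Y f. f) u"
    and ucomp: "\<forall>t l r b. sq C t l r b \<longrightarrow>
              (\<exists>a. vweq C Z a \<and>
                   u (t, l, r, b) = (a, vid C (hcod C t), vid C (hdom C b), vid C (hcod C b)))"
    using stabJ by blast
  have wf: "T \<in> hor C" "h \<in> hor C" "L \<in> ver C" "v \<in> ver C" "vdom C L = hdom C T" "vdom C v = hcod C T"
      "vcod C L = hdom C h" "vcod C v = hcod C h" using sq_wf[OF s] by auto
  define Q where "Q = vcod C L"
  define B where "B = vdom C v"
  define B' where "B' = vcod C v"
  have Qo: "Q \<in> obj C" unfolding Q_def using ver_cod wf by blast
  have Bo: "B \<in> obj C" unfolding B_def using ver_dom wf by blast
  have B'o: "B' \<in> obj C" unfolding B'_def using ver_cod wf by blast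
  note hQ = hinit[OF Qo]
  obtain x l where toe: "to (L, hinit C Z Q) = (x,l,L,hinit C Z Q)" and F: "sq C x l L (hinit C Z Q)"
    using to_shape[OF toF tosec wf(3) conjunct1[OF hQ]] hQ unfolding Q_def by metis
  have Fwf: "x \<in> hor C" "l \<in> ver C" "vdom C l = hdom C x" "hcod C x = vdom C L" "vcod C l = Z"
    using sq_wf[OF F] hQ by auto
  have XF: "sq C (hcomp C T x) l v (hcomp C h (hinit C Z Q))" using sq_hc[OF F s] .
  have hh: "hcomp C h (hinit C Z Q) = hinit C Z B'"
    apply (rule hinit_eq) using hcomp[of "hinit C Z Q" h] hQ wf unfolding Q_def B'_def by auto
  have hT: "hcomp C T x \<in> hor C \<and> hdom C (hcomp C T x) = hdom C x"
    using hcomp[of x T] Fwf wf by auto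
  have V: "sq C (hinit C Z B) (vid C Z) v (hinit C Z B')" using vw unfolding vweq_def B_def B'_def by auto
  note hB' = hinit[OF B'o]
  obtain t0 l0 where toe2: "to (v, hinit C Z B') = (t0,l0,v,hinit C Z B')" and K: "sq C t0 l0 v (hinit C Z B')"
    using to_shape[OF toF tosec wf(4) conjunct1[OF hB']] hB' unfolding B'_def by metis
  have l0w: "l0 \<in> ver C" "vcod C l0 = Z" using sq_wf[OF K] hB' by auto
  obtain a1 where a1: "vweq C Z a1"
    "(a1, vid C (hcod C (hcomp C T x)), vid C (hdom C (hinit C Z B')), vid C (hcod C (hinit C Z B'))) \<in> Hom (square_cat C) (t0,l0,v,hinit C Z B') (hcomp C T x, l, v, hinit C Z B')"
    using u_at[OF unat ucomp toe2] XF hh by metis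
  obtain a2 where a2: "vweq C Z a2"
    "(a2, vid C (hcod C (hinit C Z B)), vid C (hdom C (hinit C Z B')), vid C (hcod C (hinit C Z B'))) \<in> Hom (square_cat C) (t0,l0,v,hinit C Z B') (hinit C Z B, vid C Z, v, hinit C Z B')"
    using u_at[OF unat ucomp toe2 V] by metis
  have e1: "vcomp C l a1 = vcomp C (vid C Z) l0" "a1 \<in> ver C" "vcod C a1 = hdom C x"
    using a1(2) hB' hT unfolding sq_hom by auto
  have e2: "vcomp C (vid C Z) a2 = vcomp C (vid C Z) l0" "a2 \<in> ver C" "vcod C a2 = Z"
    using a2(2) hB' hinit[OF Bo] unfolding sq_hom by auto
  have "a2 = l0" using e2 l0w vid_l by metis
  then have l0v: "vweq C Z l0" using a2 by simp
  have l0a1: "vcomp C l a1 = l0" using e1 l0w vid_l by metis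
  obtain a1' where a1': "v_inverse C a1 a1'" "vweq C Z a1'" using vweq_inv[OF a1(1)] by blast
  have a1'w: "a1' \<in> ver C" "vdom C a1' = vcod C a1" "vcod C a1' = vdom C a1" "vcomp C a1 a1' = vid C (vcod C a1)"
    using a1'(1) unfolding v_inverse_def by auto
  have dl0: "vdom C l0 = vdom C a1" using e1 l0a1 vcomp[of a1 l] Fwf by (metis)
  have c: "vweq C Z (vcomp C l0 a1')" by (rule vweq_comp[OF a1'(2) l0v]) (use a1'w dl0 in auto)
  have "vcomp C l0 a1' = l"
    apply (rule vZ_eq[OF Fwf(2) Fwf(5)])
    using vcomp[of a1' l0] a1'w l0w dl0 e1 Fwf by auto
  then have lv: "vweq C Z l" using c by simp
  have s2: "sq C (hinit C Z (vdom C l)) (vid C Z) l (hinit C Z Z)" using lv Fwf unfolding vweq_def by auto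
  have s3: "sq C (hcomp C x (hinit C Z (vdom C l))) (vid C Z) L (hcomp C (hinit C Z Q) (hinit C Z Z))"
    using sq_hc[OF s2 F] .
  have Ro: "vdom C l \<in> obj C" using ver_dom Fwf by blast
  have "hcomp C x (hinit C Z (vdom C l)) = hinit C Z (vdom C L)"
    apply (rule hinit_eq) using hcomp[of "hinit C Z (vdom C l)" x] hinit[OF Ro] Fwf by auto
  moreover have "hcomp C (hinit C Z Q) (hinit C Z Z) = hinit C Z (vcod C L)"
    apply (rule hinit_eq) using hcomp[of "hinit C Z Z" "hinit C Z Q"] hinit[OF Zobj] hQ unfolding Q_def by auto
  ultimately show ?thesis using s3 wf unfolding vweq_def by simp
qed


lemma sqhom_cancel:
  assumes X: "sq C t l r b" and Y: "sq C t' l' r' b'"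
    and F: "(fa,fb,fc,fd) \<in> Hom (square_cat C) (t,l,r,b) (t',l',r',b')"
    and F': "(fa',fb,fc,fd) \<in> Hom (square_cat C) (t,l,r,b) (t',l',r',b')"
  shows "fa = fa'"
proof -
  obtain to tm u where toF: "is_functor (cospan_cat C) (square_cat C) to tm"
    and tosec: "\<forall>x\<in>Ob (cospan_cat C). j_o (to x) = x"
    and unat: "is_nat_trans (square_cat C) (square_cat C)
              (\<lambda>X. to (j_o X)) (\<lambda>X Y f. tm (j_o X) (j_o Y) (j_m X Y f))
              (\<lambda>X. X) (\<lambda>X Y f. f) u"
    and ucomp: "\<forall>t l r b. sq C t l r b \<longrightarrow>
              (\<exists>a. vweq C Z a \<and>
                   u (t, l, r, b) = (a, vid C (hcod C t), vid C (hdom C b), vid C (hcod C b)))"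
    using stabJ by blast
  have wf: "r \<in> ver C" "b \<in> hor C" "vcod C r = hcod C b" using sq_wf[OF X] by auto
  obtain t0 l0 where toe: "to (r,b) = (t0,l0,r,b)" and K: "sq C t0 l0 r b"
    using to_shape[OF toF tosec wf] by metis
  obtain a where a: "vweq C Z a" "u (t,l,r,b) = (a, vid C (hcod C t), vid C (hdom C b), vid C (hcod C b))"
    "(a, vid C (hcod C t), vid C (hdom C b), vid C (hcod C b)) \<in> Hom (square_cat C) (t0,l0,r,b) (t,l,r,b)"
    using u_at[OF unat ucomp toe X] by metis
  have nat: "\<And>G. G \<in> Hom (square_cat C) (t,l,r,b) (t',l',r',b') \<Longrightarrow>
      Cmp (square_cat C) (u (t',l',r',b')) (tm (j_o (t,l,r,b)) (j_o (t',l',r',b')) (j_m (t,l,r,b) (t',l',r',b') G))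
      = Cmp (square_cat C) G (u (t,l,r,b))"
    using unat X Y unfolding is_nat_trans_def by (auto simp: sq_obj)
  have "Cmp (square_cat C) (fa,fb,fc,fd) (u (t,l,r,b)) = Cmp (square_cat C) (fa',fb,fc,fd) (u (t,l,r,b))"
    using nat[OF F] nat[OF F'] by (simp add: j_m_def)
  then have eq: "vcomp C fa a = vcomp C fa' a" using a(2) by (simp add: sq_cmp)
  obtain a' where a': "v_inverse C a a'" using vweq_inv[OF a(1)] by blast
  have aw: "a \<in> ver C" "vcod C a = hdom C t" using a(3) unfolding sq_hom by auto
  have a'w: "a' \<in> ver C" "vdom C a' = vcod C a" "vcomp C a a' = vid C (vcod C a)" "vcod C a' = vdom C a"
    using a' unfolding v_inverse_def by auto
  have fw: "fa \<in> ver C" "vdom C fa = hdom C t" "fa' \<in> ver C" "vdom C fa' = hdom C t"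
    using F F' unfolding sq_hom by auto
  have "fa = vcomp C fa (vcomp C a a')" using a'w aw fw vid_r by metis
  also have "\<dots> = vcomp C (vcomp C fa a) a'" using vassoc[of a' a fa] a'w aw fw by auto
  also have "\<dots> = vcomp C (vcomp C fa' a) a'" using eq by simp
  also have "\<dots> = vcomp C fa' (vcomp C a a')" using vassoc[of a' a fa'] a'w aw fw by auto
  also have "\<dots> = fa'" using a'w aw fw vid_r by metis
  finally show ?thesis .
qed

lemma sqhom_lift:
  assumes X: "sq C t l r b" and Y: "sq C t' l' r' b'"
    and phi: "(fb,fc,fd) \<in> Hom (cospan_cat C) (r,b) (r',b')"
  shows "\<exists>fa. (fa,fb,fc,fd) \<in> Hom (square_cat C) (t,l,r,b) (t',l',r',b')"
proof -
  obtain to tm u where toF: "is_functor (cospan_cat C) (square_cat C) to tm"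
    and tosec: "\<forall>x\<in>Ob (cospan_cat C). j_o (to x) = x"
    and tmsec: "\<forall>x\<in>Ob (cospan_cat C). \<forall>y\<in>Ob (cospan_cat C). \<forall>f\<in>Hom (cospan_cat C) x y.
          j_m (to x) (to y) (tm x y f) = f"
    and unat: "is_nat_trans (square_cat C) (square_cat C)
              (\<lambda>X. to (j_o X)) (\<lambda>X Y f. tm (j_o X) (j_o Y) (j_m X Y f))
              (\<lambda>X. X) (\<lambda>X Y f. f) u"
    and ucomp: "\<forall>t l r b. sq C t l r b \<longrightarrow>
              (\<exists>a. vweq C Z a \<and>
                   u (t, l, r, b) = (a, vid C (hcod C t), vid C (hdom C b), vid C (hcod C b)))"
    using stabJ by blast
  have wf: "r \<in> ver C" "b \<in> hor C" "vcod C r = hcod C b" "t \<in> hor C" "l \<in> ver C"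
     "vdom C l = hdom C t" "vdom C r = hcod C t" "vcod C l = hdom C b" using sq_wf[OF X] by auto
  have wf': "r' \<in> ver C" "b' \<in> hor C" "vcod C r' = hcod C b'" "t' \<in> hor C" "l' \<in> ver C"
     "vdom C l' = hdom C t'" "vdom C r' = hcod C t'" "vcod C l' = hdom C b'" using sq_wf[OF Y] by auto
  obtain t0 l0 where toe: "to (r,b) = (t0,l0,r,b)" and K: "sq C t0 l0 r b"
    using to_shape[OF toF tosec wf(1-3)] by metis
  obtain t1 l1 where toe': "to (r',b') = (t1,l1,r',b')" and K': "sq C t1 l1 r' b'"
    using to_shape[OF toF tosec wf'(1-3)] by metis
  have Kw: "t0 \<in> hor C" "l0 \<in> ver C" "vdom C l0 = hdom C t0" "hcod C t0 = vdom C r" "vcod C l0 = hdom C b"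
    using sq_wf[OF K] by auto
  have K'w: "t1 \<in> hor C" "l1 \<in> ver C" "vdom C l1 = hdom C t1" "hcod C t1 = vdom C r'" "vcod C l1 = hdom C b'"
    using sq_wf[OF K'] by auto
  obtain a where a: "vweq C Z a"
    "(a, vid C (hcod C t), vid C (hdom C b), vid C (hcod C b)) \<in> Hom (square_cat C) (t0,l0,r,b) (t,l,r,b)"
    using u_at[OF unat ucomp toe X] by metis
  obtain a1 where a1: "vweq C Z a1"
    "(a1, vid C (hcod C t'), vid C (hdom C b'), vid C (hcod C b')) \<in> Hom (square_cat C) (t1,l1,r',b') (t',l',r',b')"
    using u_at[OF unat ucomp toe' Y] by metis
  have aw: "a \<in> ver C" "vdom C a = hdom C t0" "vcod C a = hdom C t" "sq C t0 a (vid C (hcod C t)) t"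
     "vcomp C l a = vcomp C (vid C (hdom C b)) l0" using a(2) unfolding sq_hom by auto
  have a1w: "a1 \<in> ver C" "vdom C a1 = hdom C t1" "vcod C a1 = hdom C t'" "sq C t1 a1 (vid C (hcod C t')) t'"
     "vcomp C l' a1 = vcomp C (vid C (hdom C b')) l1" using a1(2) unfolding sq_hom by auto
  obtain a' where a': "v_inverse C a a'" using vweq_inv[OF a(1)] by blast
  have a'w: "a' \<in> ver C" "vdom C a' = vcod C a" "vcomp C a a' = vid C (vcod C a)" "vcod C a' = vdom C a"
     "vcomp C a' a = vid C (vdom C a)"
    using a' unfolding v_inverse_def by auto
  have ot: "hcod C t \<in> obj C" using hor_cod wf by blast
  have s1: "sq C t a' (vid C (hcod C t)) t0"
    apply (rule transport[OF Kw(1) wf(4) _ vinv_vid[OF ot] _ _ _ _ aw(4)])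
    using a' aw vid[OF ot] Kw wf by auto
  have co: "(r,b) \<in> Ob (cospan_cat C)" "(r',b') \<in> Ob (cospan_cat C)" using wf wf' co_obj by auto
  have tmh: "tm (r,b) (r',b') (fb,fc,fd) \<in> Hom (square_cat C) (t0,l0,r,b) (t1,l1,r',b')"
    using toF co phi toe toe' unfolding is_functor_def by metis
  obtain ta where tae: "tm (r,b) (r',b') (fb,fc,fd) = (ta,fb,fc,fd)"
    using tmsec co phi toe toe' unfolding j_m_def by (cases "tm (r,b) (r',b') (fb,fc,fd)") (metis case_prod_conv)
  have ph: "fb \<in> ver C" "fc \<in> ver C" "fd \<in> ver C" "vdom C fb = vdom C r" "vcod C fb = vdom C r'"
     "vdom C fc = hdom C b" "vcod C fc = hdom C b'" "vdom C fd = vcod C r" "vcod C fd = vcod C r'"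
     "sq C b fc fd b'" "vcomp C r' fb = vcomp C fd r" using phi unfolding co_hom by auto
  have taw: "ta \<in> ver C" "vdom C ta = hdom C t0" "vcod C ta = hdom C t1" "sq C t0 ta fb t1"
     "vcomp C l1 ta = vcomp C fc l0" using tmh[unfolded tae] unfolding sq_hom by auto
  define fa where "fa = vcomp C a1 (vcomp C ta a')"
  have c1: "vcomp C ta a' \<in> ver C \<and> vdom C (vcomp C ta a') = hdom C t \<and> vcod C (vcomp C ta a') = hdom C t1"
    using vcomp[of a' ta] a'w taw aw by auto
  have c2: "fa \<in> ver C \<and> vdom C fa = hdom C t \<and> vcod C fa = hdom C t'"
    unfolding fa_def using vcomp[of "vcomp C ta a'" a1] c1 a1w by auto
  have sqa: "sq C t (vcomp C ta a') (vcomp C fb (vid C (hcod C t))) t1" using sq_vc[OF s1 taw(4)] .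
  have "vcomp C fb (vid C (hcod C t)) = fb" using vid_r[OF ph(1)] ph wf by simp
  then have sqa': "sq C t (vcomp C ta a') fb t1" using sqa by simp
  have sqb: "sq C t fa (vcomp C (vid C (hcod C t')) fb) t'" unfolding fa_def using sq_vc[OF sqa' a1w(4)] .
  have "vcomp C (vid C (hcod C t')) fb = fb" using vid_l[OF ph(1)] ph wf' by simp
  then have sqb': "sq C t fa fb t'" using sqb by simp
  have l1e: "vcomp C l' a1 = l1" using a1w(5) vid_l[OF K'w(2)] K'w by simp
  have l0e: "vcomp C l a = l0" using aw(5) vid_l[OF Kw(2)] Kw by simp
  have "vcomp C l' fa = vcomp C (vcomp C l' a1) (vcomp C ta a')"
    unfolding fa_def using vassoc[of "vcomp C ta a'" a1 l'] c1 a1w wf' by auto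
  also have "\<dots> = vcomp C (vcomp C l1 ta) a'" using l1e vassoc[of a' ta l1] a'w taw K'w aw by auto
  also have "\<dots> = vcomp C (vcomp C fc l0) a'" using taw by simp
  also have "\<dots> = vcomp C fc (vcomp C l0 a')" using vassoc[of a' l0 fc] a'w Kw aw ph by auto
  also have "vcomp C l0 a' = l"
  proof -
    have "vcomp C l0 a' = vcomp C (vcomp C l a) a'" using l0e by simp
    also have "\<dots> = vcomp C l (vcomp C a a')" using vassoc[of a' a l] a'w aw wf by auto
    also have "\<dots> = l" using a'w aw wf vid_r by metis
    finally show ?thesis .
  qed
  finally have lc: "vcomp C l' fa = vcomp C fc l" .
  show ?thesis
    apply (rule exI[of _ fa])
    unfolding sq_hom using c2 sqb' lc ph wf wf' by auto
qed


lemma Sn_obj_iff: "(A,hA,vA) \<in> Sn_obj C Z n \<longleftrightarrow>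
     (\<forall>j k. \<not> (j \<le> k \<and> k \<le> n) \<longrightarrow> A j k = undefined) \<and>
     (\<forall>j k. \<not> (j \<le> k \<and> k < n) \<longrightarrow> hA j k = undefined) \<and>
     (\<forall>j k. \<not> (j < k \<and> k \<le> n) \<longrightarrow> vA j k = undefined) \<and>
     (\<forall>j\<le>n. A j j = Z) \<and>
     (\<forall>j k. j \<le> k \<and> k \<le> n \<longrightarrow> A j k \<in> obj C) \<and>
     (\<forall>j k. j \<le> k \<and> k < n \<longrightarrow>
        hA j k \<in> hor C \<and> hdom C (hA j k) = A j k \<and> hcod C (hA j k) = A j (k + 1)) \<and>
     (\<forall>j k. j < k \<and> k \<le> n \<longrightarrow>
        vA j k \<in> ver C \<and> vdom C (vA j k) = A j k \<and> vcod C (vA j k) = A (j + 1) k) \<and>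
     (\<forall>j k. j < k \<and> k < n \<longrightarrow> sq C (hA j k) (vA j k) (vA j (k + 1)) (hA (j + 1) k))"
  by (simp add: Sn_obj_def)

lemma Sn_hom_iff: "f \<in> Sn_hom C Z n (A,hA,vA) (A',hA',vA') \<longleftrightarrow>
     (\<forall>j k. \<not> (j \<le> k \<and> k \<le> n) \<longrightarrow> f j k = undefined) \<and>
     (\<forall>j k. j \<le> k \<and> k \<le> n \<longrightarrow>
        f j k \<in> ver C \<and> vdom C (f j k) = A j k \<and> vcod C (f j k) = A' j k \<and> vweq C Z (f j k)) \<and>
     (\<forall>j k. j \<le> k \<and> k < n \<longrightarrow> sq C (hA j k) (f j k) (f j (k + 1)) (hA' j k)) \<and>
     (\<forall>j k. j < k \<and> k \<le> n \<longrightarrow> vcomp C (vA' j k) (f j k) = vcomp C (f (j + 1) k) (vA j k))"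
  by (simp add: Sn_hom_def)

lemma Vn_obj_iff: "(a,p) \<in> Vn_obj C Z n \<longleftrightarrow>
     (\<forall>i. \<not> (1 \<le> i \<and> i \<le> n) \<longrightarrow> a i = undefined \<and> p i = undefined) \<and>
     (\<forall>i. 1 \<le> i \<and> i \<le> n \<longrightarrow> a i \<in> obj C \<and> p i \<in> ver C \<and> vdom C (p i) = a i) \<and>
     (\<forall>i. 1 \<le> i \<and> i < n \<longrightarrow> vcod C (p i) = a (i + 1)) \<and>
     (1 \<le> n \<longrightarrow> vcod C (p n) = Z)"
  by (simp add: Vn_obj_def)

lemma Vn_hom_iff: "g \<in> Vn_hom C Z n (a,p) (a',p') \<longleftrightarrow>
     (\<forall>i. \<not> (1 \<le> i \<and> i \<le> n) \<longrightarrow> g i = undefined) \<and>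
     (\<forall>i. 1 \<le> i \<and> i \<le> n \<longrightarrow>
        g i \<in> ver C \<and> vdom C (g i) = a i \<and> vcod C (g i) = a' i \<and> vweq C Z (g i)) \<and>
     (\<forall>i. 1 \<le> i \<and> i < n \<longrightarrow> vcomp C (p' i) (g i) = vcomp C (g (i + 1)) (p i)) \<and>
     (1 \<le> n \<longrightarrow> vcomp C (p' n) (g n) = vcomp C (vid C Z) (p n))"
  by (simp add: Vn_hom_def)

lemma vcomm_comp:
  assumes "f \<in> ver C" "g \<in> ver C" "f' \<in> ver C" "g' \<in> ver C" "v \<in> ver C" "v' \<in> ver C" "v'' \<in> ver C"
    "vcod C f = vdom C g" "vcod C f = vdom C v'" "vcod C g = vdom C v''" "vdom C f = vdom C v"
    "vcod C v = vdom C f'" "vcod C f' = vdom C g'" "vcod C v' = vdom C g'"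
    "vcomp C v' f = vcomp C f' v" "vcomp C v'' g = vcomp C g' v'"
  shows "vcomp C v'' (vcomp C g f) = vcomp C (vcomp C g' f') v"
proof -
  have "vcomp C v'' (vcomp C g f) = vcomp C (vcomp C v'' g) f" using vassoc assms by metis
  also have "\<dots> = vcomp C (vcomp C g' v') f" using assms by simp
  also have "\<dots> = vcomp C g' (vcomp C v' f)" using vassoc assms by metis
  also have "\<dots> = vcomp C g' (vcomp C f' v)" using assms by simp
  also have "\<dots> = vcomp C (vcomp C g' f') v" using vassoc assms by metis
  finally show ?thesis .
qed

lemma Sn_Id: assumes X: "X \<in> Ob (Sn_cat C Z n)" shows "Id (Sn_cat C Z n) X \<in> Hom (Sn_cat C Z n) X X"
proof -
  obtain A hA vA where Xe: "X = (A,hA,vA)" by (cases X)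
  have o: "(A,hA,vA) \<in> Sn_obj C Z n" using X Xe by (simp add: Sn_cat_def)
  note oo = o[unfolded Sn_obj_iff]
  have "(\<lambda>j k. if j \<le> k \<and> k \<le> n then vid C (A j k) else undefined) \<in> Sn_hom C Z n (A,hA,vA) (A,hA,vA)"
    unfolding Sn_hom_iff
  proof (intro conjI allI impI)
    fix j k assume a: "j \<le> k \<and> k \<le> n"
    then have "A j k \<in> obj C" using oo by blast
    then show "(if j \<le> k \<and> k \<le> n then vid C (A j k) else undefined) \<in> ver C"
      "vdom C (if j \<le> k \<and> k \<le> n then vid C (A j k) else undefined) = A j k"
      "vcod C (if j \<le> k \<and> k \<le> n then vid C (A j k) else undefined) = A j k"
      "vweq C Z (if j \<le> k \<and> k \<le> n then vid C (A j k) else undefined)"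
      using a vid vweq_vid by auto
  next
    fix j k assume a: "j \<le> k \<and> k < n"
    then have h: "hA j k \<in> hor C" "hdom C (hA j k) = A j k" "hcod C (hA j k) = A j (k+1)" using oo by blast+
    show "sq C (hA j k) (if j \<le> k \<and> k \<le> n then vid C (A j k) else undefined)
          (if j \<le> k + 1 \<and> k + 1 \<le> n then vid C (A j (k + 1)) else undefined) (hA j k)"
      using a sq_hidsq[OF h(1)] h by auto
  next
    fix j k assume a: "j < k \<and> k \<le> n"
    then have h: "vA j k \<in> ver C" "vdom C (vA j k) = A j k" "vcod C (vA j k) = A (j+1) k" using oo by blast+
    show "vcomp C (vA j k) (if j \<le> k \<and> k \<le> n then vid C (A j k) else undefined) =
          vcomp C (if j + 1 \<le> k \<and> k \<le> n then vid C (A (j + 1) k) else undefined) (vA j k)"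
      using a vid_l[OF h(1)] vid_r[OF h(1)] h by auto
  qed auto
  then show ?thesis using Xe by (simp add: Sn_cat_def)
qed

lemma Sn_Cmp: assumes X: "X \<in> Ob (Sn_cat C Z n)" and Y: "Y \<in> Ob (Sn_cat C Z n)" and W: "W \<in> Ob (Sn_cat C Z n)"
  and f: "f \<in> Hom (Sn_cat C Z n) X Y" and g: "g \<in> Hom (Sn_cat C Z n) Y W"
  shows "Cmp (Sn_cat C Z n) g f \<in> Hom (Sn_cat C Z n) X W"
proof -
  obtain A hA vA where Xe: "X = (A,hA,vA)" by (cases X)
  obtain A' hA' vA' where Ye: "Y = (A',hA',vA')" by (cases Y)
  obtain A'' hA'' vA'' where We: "W = (A'',hA'',vA'')" by (cases W)
  have fh: "f \<in> Sn_hom C Z n (A,hA,vA) (A',hA',vA')" using f Xe Ye by (simp add: Sn_cat_def)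
  have gh: "g \<in> Sn_hom C Z n (A',hA',vA') (A'',hA'',vA'')" using g Ye We by (simp add: Sn_cat_def)
  note ff = fh[unfolded Sn_hom_iff] and gg = gh[unfolded Sn_hom_iff]
  have oX: "(A,hA,vA) \<in> Sn_obj C Z n" using X Xe by (simp add: Sn_cat_def)
  have oY: "(A',hA',vA') \<in> Sn_obj C Z n" using Y Ye by (simp add: Sn_cat_def)
  have oW: "(A'',hA'',vA'') \<in> Sn_obj C Z n" using W We by (simp add: Sn_cat_def)
  note ox = oX[unfolded Sn_obj_iff] and oy = oY[unfolded Sn_obj_iff] and ow = oW[unfolded Sn_obj_iff]
  have "(\<lambda>j k. if j \<le> k \<and> k \<le> n then vcomp C (g j k) (f j k) else undefined) \<in> Sn_hom C Z n (A,hA,vA) (A'',hA'',vA'')"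
    unfolding Sn_hom_iff
  proof (intro conjI allI impI)
    fix j k assume a: "j \<le> k \<and> k \<le> n"
    have f1: "f j k \<in> ver C" "vdom C (f j k) = A j k" "vcod C (f j k) = A' j k" "vweq C Z (f j k)" using ff a by blast+
    have g1: "g j k \<in> ver C" "vdom C (g j k) = A' j k" "vcod C (g j k) = A'' j k" "vweq C Z (g j k)" using gg a by blast+
    show "(if j \<le> k \<and> k \<le> n then vcomp C (g j k) (f j k) else undefined) \<in> ver C"
      "vdom C (if j \<le> k \<and> k \<le> n then vcomp C (g j k) (f j k) else undefined) = A j k"
      "vcod C (if j \<le> k \<and> k \<le> n then vcomp C (g j k) (f j k) else undefined) = A'' j k"
      "vweq C Z (if j \<le> k \<and> k \<le> n then vcomp C (g j k) (f j k) else undefined)"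
      using a vcomp[of "f j k" "g j k"] vweq_comp[of "f j k" "g j k"] f1 g1 by auto
  next
    fix j k assume a: "j \<le> k \<and> k < n"
    have "sq C (hA j k) (f j k) (f j (k+1)) (hA' j k)" using ff a by blast
    moreover have "sq C (hA' j k) (g j k) (g j (k+1)) (hA'' j k)" using gg a by blast
    ultimately show "sq C (hA j k) (if j \<le> k \<and> k \<le> n then vcomp C (g j k) (f j k) else undefined)
        (if j \<le> k + 1 \<and> k + 1 \<le> n then vcomp C (g j (k + 1)) (f j (k + 1)) else undefined) (hA'' j k)"
    proof -
      have "sq C (hA j k) (vcomp C (g j k) (f j k)) (vcomp C (g j (k+1)) (f j (k+1))) (hA'' j k)"
        by (rule sq_vc) fact+
      then show ?thesis using a by simp
    qed
  next
    fix j k assume a: "j < k \<and> k \<le> n"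
    have a2: "j+1 \<le> k" "j \<le> k" using a by auto
    have f1: "f j k \<in> ver C" "vdom C (f j k) = A j k" "vcod C (f j k) = A' j k" using ff a by auto
    have g1: "g j k \<in> ver C" "vdom C (g j k) = A' j k" "vcod C (g j k) = A'' j k" using gg a by auto
    have f2: "f (j+1) k \<in> ver C" "vdom C (f (j+1) k) = A (j+1) k" "vcod C (f (j+1) k) = A' (j+1) k" using ff a a2 by auto
    have g2: "g (j+1) k \<in> ver C" "vdom C (g (j+1) k) = A' (j+1) k" "vcod C (g (j+1) k) = A'' (j+1) k" using gg a a2 by auto
    have v1: "vA j k \<in> ver C" "vdom C (vA j k) = A j k" "vcod C (vA j k) = A (j+1) k" using ox a by blast+
    have v2: "vA' j k \<in> ver C" "vdom C (vA' j k) = A' j k" "vcod C (vA' j k) = A' (j+1) k" using oy a by blast+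
    have v3: "vA'' j k \<in> ver C" "vdom C (vA'' j k) = A'' j k" "vcod C (vA'' j k) = A'' (j+1) k" using ow a by blast+
    have c1: "vcomp C (vA' j k) (f j k) = vcomp C (f (j + 1) k) (vA j k)" using ff a by blast
    have c2: "vcomp C (vA'' j k) (g j k) = vcomp C (g (j + 1) k) (vA' j k)" using gg a by blast
    show "vcomp C (vA'' j k) (if j \<le> k \<and> k \<le> n then vcomp C (g j k) (f j k) else undefined) =
       vcomp C (if j + 1 \<le> k \<and> k \<le> n then vcomp C (g (j + 1) k) (f (j + 1) k) else undefined) (vA j k)"
    proof -
      have "vcomp C (vA'' j k) (vcomp C (g j k) (f j k)) = vcomp C (vcomp C (g (j + 1) k) (f (j + 1) k)) (vA j k)"
        apply (rule vcomm_comp[of "f j k" "g j k" "f (j+1) k" "g (j+1) k" "vA j k" "vA' j k" "vA'' j k"])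
        using f1 g1 f2 g2 v1 v2 v3 c1 c2 by simp_all
      then show ?thesis using a a2 by simp
    qed
  qed auto
  then show ?thesis using Xe Ye We by (simp add: Sn_cat_def)
qed

lemma Vn_Id: assumes Y: "Y \<in> Ob (Vn_cat C Z n)" shows "Id (Vn_cat C Z n) Y \<in> Hom (Vn_cat C Z n) Y Y"
proof -
  obtain a p where Ye: "Y = (a,p)" by (cases Y)
  have o: "(a,p) \<in> Vn_obj C Z n" using Y Ye by (simp add: Vn_cat_def)
  note oo = o[unfolded Vn_obj_iff]
  have "(\<lambda>i. if 1 \<le> i \<and> i \<le> n then vid C (a i) else undefined) \<in> Vn_hom C Z n (a,p) (a,p)"
    unfolding Vn_hom_iff
  proof (intro conjI allI impI)
    fix i assume i: "1 \<le> i \<and> i \<le> n"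
    then have "a i \<in> obj C" using oo by blast
    then show "(if 1 \<le> i \<and> i \<le> n then vid C (a i) else undefined) \<in> ver C"
      "vdom C (if 1 \<le> i \<and> i \<le> n then vid C (a i) else undefined) = a i"
      "vcod C (if 1 \<le> i \<and> i \<le> n then vid C (a i) else undefined) = a i"
      "vweq C Z (if 1 \<le> i \<and> i \<le> n then vid C (a i) else undefined)"
      using i vid vweq_vid by auto
  next
    fix i assume i: "1 \<le> i \<and> i < n"
    then have h: "p i \<in> ver C" "vdom C (p i) = a i" "vcod C (p i) = a (i+1)" using oo by auto
    show "vcomp C (p i) (if 1 \<le> i \<and> i \<le> n then vid C (a i) else undefined) =
        vcomp C (if 1 \<le> i + 1 \<and> i + 1 \<le> n then vid C (a (i + 1)) else undefined) (p i)"
      using i vid_l[OF h(1)] vid_r[OF h(1)] h by auto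
  next
    assume n: "1 \<le> n"
    then have h: "p n \<in> ver C" "vdom C (p n) = a n" "vcod C (p n) = Z" using oo by auto
    show "vcomp C (p n) (if 1 \<le> n \<and> n \<le> n then vid C (a n) else undefined) = vcomp C (vid C Z) (p n)"
      using n vid_l[OF h(1)] vid_r[OF h(1)] h by auto
  qed auto
  then show ?thesis using Ye by (simp add: Vn_cat_def)
qed

lemma Vn_l: assumes X: "X \<in> Ob (Vn_cat C Z n)" and Y: "Y \<in> Ob (Vn_cat C Z n)" and f: "f \<in> Hom (Vn_cat C Z n) X Y"
  shows "Cmp (Vn_cat C Z n) (Id (Vn_cat C Z n) Y) f = f" "Cmp (Vn_cat C Z n) f (Id (Vn_cat C Z n) X) = f"
proof -
  obtain a p where Xe: "X = (a,p)" by (cases X)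
  obtain a' p' where Ye: "Y = (a',p')" by (cases Y)
  have fh: "f \<in> Vn_hom C Z n (a,p) (a',p')" using f Xe Ye by (simp add: Vn_cat_def)
  note ff = fh[unfolded Vn_hom_iff]
  show "Cmp (Vn_cat C Z n) (Id (Vn_cat C Z n) Y) f = f"
  proof (rule ext)
    fix i show "Cmp (Vn_cat C Z n) (Id (Vn_cat C Z n) Y) f i = f i"
    proof (cases "1 \<le> i \<and> i \<le> n")
      case True
      then have "f i \<in> ver C" "vcod C (f i) = a' i" using ff by blast+
      then show ?thesis using True Ye vid_l[of "f i"] by (simp add: Vn_cat_def)
    next
      case False
      then have "f i = undefined" using ff by blast
      then show ?thesis using False by (auto simp: Vn_cat_def)
    qed
  qed
  show "Cmp (Vn_cat C Z n) f (Id (Vn_cat C Z n) X) = f"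
  proof (rule ext)
    fix i show "Cmp (Vn_cat C Z n) f (Id (Vn_cat C Z n) X) i = f i"
    proof (cases "1 \<le> i \<and> i \<le> n")
      case True
      then have "f i \<in> ver C" "vdom C (f i) = a i" using ff by blast+
      then show ?thesis using True Xe vid_r[of "f i"] by (simp add: Vn_cat_def)
    next
      case False
      then have "f i = undefined" using ff by blast
      then show ?thesis using False by (auto simp: Vn_cat_def)
    qed
  qed
qed

lemma Sn_fnn: assumes "f \<in> Sn_hom C Z n (A,hA,vA) (A',hA',vA')" "(A,hA,vA) \<in> Sn_obj C Z n" "(A',hA',vA') \<in> Sn_obj C Z n"
  and "j \<le> n"
  shows "f j j = vid C Z"
proof -
  have "f j j \<in> ver C" "vdom C (f j j) = A j j" "vcod C (f j j) = A' j j" using assms(1,4) unfolding Sn_hom_iff by auto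
  moreover have "A j j = Z" "A' j j = Z" using assms(2,3,4) unfolding Sn_obj_iff by auto
  ultimately show ?thesis using vidZ_eq by auto
qed

lemma Un_obj: assumes o: "(A,hA,vA) \<in> Sn_obj C Z n" shows "Un_o n (A,hA,vA) \<in> Vn_obj C Z n"
proof -
  note oo = o[unfolded Sn_obj_iff]
  have "(\<lambda>i. if 1 \<le> i \<and> i \<le> n then A (i - 1) n else undefined,
      \<lambda>i. if 1 \<le> i \<and> i \<le> n then vA (i - 1) n else undefined) \<in> Vn_obj C Z n"
    unfolding Vn_obj_iff
  proof (intro conjI allI impI)
    fix i assume i: "1 \<le> i \<and> i \<le> n"
    have "A (i-1) n \<in> obj C" "vA (i-1) n \<in> ver C" "vdom C (vA (i-1) n) = A (i-1) n" using oo i by auto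
    then show "(if 1 \<le> i \<and> i \<le> n then A (i - 1) n else undefined) \<in> obj C"
      "(if 1 \<le> i \<and> i \<le> n then vA (i - 1) n else undefined) \<in> ver C"
      "vdom C (if 1 \<le> i \<and> i \<le> n then vA (i - 1) n else undefined) = (if 1 \<le> i \<and> i \<le> n then A (i - 1) n else undefined)"
      using i by auto
  next
    fix i assume i: "1 \<le> i \<and> i < n"
    have "vcod C (vA (i-1) n) = A (i - 1 + 1) n" using oo i by auto
    then show "vcod C (if 1 \<le> i \<and> i \<le> n then vA (i - 1) n else undefined) = (if 1 \<le> i + 1 \<and> i + 1 \<le> n then A (i + 1 - 1) n else undefined)"
      using i by auto
  next
    assume n: "1 \<le> n"
    have "vcod C (vA (n-1) n) = A (n - 1 + 1) n" using oo n by auto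
    moreover have "A n n = Z" using oo by auto
    ultimately show "vcod C (if 1 \<le> n \<and> n \<le> n then vA (n - 1) n else undefined) = Z" using n by auto
  qed auto
  then show ?thesis by (simp add: Un_o_def)
qed

lemma Un_hom: assumes oX: "(A,hA,vA) \<in> Sn_obj C Z n" and oY: "(A',hA',vA') \<in> Sn_obj C Z n"
  and f: "f \<in> Sn_hom C Z n (A,hA,vA) (A',hA',vA')"
  shows "Un_m n X Y f \<in> Vn_hom C Z n (Un_o n (A,hA,vA)) (Un_o n (A',hA',vA'))"
proof -
  note ff = f[unfolded Sn_hom_iff]
  have fnn: "f n n = vid C Z" using Sn_fnn[OF f oX oY] by simp
  have "(\<lambda>i. if 1 \<le> i \<and> i \<le> n then f (i - 1) n else undefined) \<in> Vn_hom C Z n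
     (\<lambda>i. if 1 \<le> i \<and> i \<le> n then A (i - 1) n else undefined, \<lambda>i. if 1 \<le> i \<and> i \<le> n then vA (i - 1) n else undefined)
     (\<lambda>i. if 1 \<le> i \<and> i \<le> n then A' (i - 1) n else undefined, \<lambda>i. if 1 \<le> i \<and> i \<le> n then vA' (i - 1) n else undefined)"
    unfolding Vn_hom_iff
  proof (intro conjI allI impI)
    fix i assume i: "1 \<le> i \<and> i \<le> n"
    have "f (i-1) n \<in> ver C" "vdom C (f (i-1) n) = A (i-1) n" "vcod C (f (i-1) n) = A' (i-1) n" "vweq C Z (f (i-1) n)"
      using ff i by auto
    then show "(if 1 \<le> i \<and> i \<le> n then f (i - 1) n else undefined) \<in> ver C"
      "vdom C (if 1 \<le> i \<and> i \<le> n then f (i - 1) n else undefined) = (if 1 \<le> i \<and> i \<le> n then A (i - 1) n else undefined)"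
      "vcod C (if 1 \<le> i \<and> i \<le> n then f (i - 1) n else undefined) = (if 1 \<le> i \<and> i \<le> n then A' (i - 1) n else undefined)"
      "vweq C Z (if 1 \<le> i \<and> i \<le> n then f (i - 1) n else undefined)" using i by auto
  next
    fix i assume i: "1 \<le> i \<and> i < n"
    have "vcomp C (vA' (i-1) n) (f (i-1) n) = vcomp C (f (i - 1 + 1) n) (vA (i-1) n)" using ff i by auto
    then show "vcomp C (if 1 \<le> i \<and> i \<le> n then vA' (i - 1) n else undefined) (if 1 \<le> i \<and> i \<le> n then f (i - 1) n else undefined) =
       vcomp C (if 1 \<le> i + 1 \<and> i + 1 \<le> n then f (i + 1 - 1) n else undefined) (if 1 \<le> i \<and> i \<le> n then vA (i - 1) n else undefined)"
      using i by auto
  next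
    assume n: "1 \<le> n"
    have "vcomp C (vA' (n-1) n) (f (n-1) n) = vcomp C (f (n - 1 + 1) n) (vA (n-1) n)" using ff n by auto
    then show "vcomp C (if 1 \<le> n \<and> n \<le> n then vA' (n - 1) n else undefined) (if 1 \<le> n \<and> n \<le> n then f (n - 1) n else undefined) =
      vcomp C (vid C Z) (if 1 \<le> n \<and> n \<le> n then vA (n - 1) n else undefined)" using n fnn by auto
  qed auto
  then show ?thesis by (simp add: Un_o_def Un_m_def)
qed

lemma U_functor: "is_functor (Sn_cat C Z n) (Vn_cat C Z n) (Un_o n) (Un_m n)"
  unfolding is_functor_def
proof (intro conjI ballI)
  fix X assume X: "X \<in> Ob (Sn_cat C Z n)"
  obtain A hA vA where Xe: "X = (A,hA,vA)" by (cases X)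
  show "Un_o n X \<in> Ob (Vn_cat C Z n)" using Un_obj X Xe by (simp add: Sn_cat_def Vn_cat_def)
next
  fix X Y f assume X: "X \<in> Ob (Sn_cat C Z n)" and Y: "Y \<in> Ob (Sn_cat C Z n)" and f: "f \<in> Hom (Sn_cat C Z n) X Y"
  obtain A hA vA where Xe: "X = (A,hA,vA)" by (cases X)
  obtain A' hA' vA' where Ye: "Y = (A',hA',vA')" by (cases Y)
  show "Un_m n X Y f \<in> Hom (Vn_cat C Z n) (Un_o n X) (Un_o n Y)"
    using Un_hom[of A hA vA n A' hA' vA' f X Y] X Y f Xe Ye by (simp add: Sn_cat_def Vn_cat_def)
next
  fix X assume X: "X \<in> Ob (Sn_cat C Z n)"
  obtain A hA vA where Xe: "X = (A,hA,vA)" by (cases X)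
  show "Un_m n X X (Id (Sn_cat C Z n) X) = Id (Vn_cat C Z n) (Un_o n X)"
    by (rule ext) (auto simp add: Xe Un_m_def Un_o_def Sn_cat_def Vn_cat_def)
next
  fix X Y W f g
  show "Un_m n X W (Cmp (Sn_cat C Z n) g f) = Cmp (Vn_cat C Z n) (Un_m n Y W g) (Un_m n X Y f)"
    by (rule ext) (auto simp add: Un_m_def Sn_cat_def Vn_cat_def)
qed


lemma SnH_u: "f \<in> Sn_hom C Z n (A,hA,vA) (A',hA',vA') \<Longrightarrow> \<not> (j \<le> k \<and> k \<le> n) \<Longrightarrow> f j k = undefined"
  unfolding Sn_hom_iff by blast
lemma SnH_v: "f \<in> Sn_hom C Z n (A,hA,vA) (A',hA',vA') \<Longrightarrow> j \<le> k \<Longrightarrow> k \<le> n \<Longrightarrow>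
   f j k \<in> ver C \<and> vdom C (f j k) = A j k \<and> vcod C (f j k) = A' j k \<and> vweq C Z (f j k)"
  unfolding Sn_hom_iff by blast
lemma SnH_sq: "f \<in> Sn_hom C Z n (A,hA,vA) (A',hA',vA') \<Longrightarrow> j \<le> k \<Longrightarrow> k < n \<Longrightarrow>
   sq C (hA j k) (f j k) (f j (k + 1)) (hA' j k)"
  unfolding Sn_hom_iff by blast
lemma SnH_c: "f \<in> Sn_hom C Z n (A,hA,vA) (A',hA',vA') \<Longrightarrow> j < k \<Longrightarrow> k \<le> n \<Longrightarrow>
   vcomp C (vA' j k) (f j k) = vcomp C (f (j + 1) k) (vA j k)"
  unfolding Sn_hom_iff by blast
lemma SnO_d: "(A,hA,vA) \<in> Sn_obj C Z n \<Longrightarrow> j \<le> n \<Longrightarrow> A j j = Z"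
  unfolding Sn_obj_iff by blast
lemma SnO_o: "(A,hA,vA) \<in> Sn_obj C Z n \<Longrightarrow> j \<le> k \<Longrightarrow> k \<le> n \<Longrightarrow> A j k \<in> obj C"
  unfolding Sn_obj_iff by blast
lemma SnO_h: "(A,hA,vA) \<in> Sn_obj C Z n \<Longrightarrow> j \<le> k \<Longrightarrow> k < n \<Longrightarrow>
   hA j k \<in> hor C \<and> hdom C (hA j k) = A j k \<and> hcod C (hA j k) = A j (k + 1)"
  unfolding Sn_obj_iff by blast
lemma SnO_v: "(A,hA,vA) \<in> Sn_obj C Z n \<Longrightarrow> j < k \<Longrightarrow> k \<le> n \<Longrightarrow>
   vA j k \<in> ver C \<and> vdom C (vA j k) = A j k \<and> vcod C (vA j k) = A (j + 1) k"
  unfolding Sn_obj_iff by blast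
lemma SnO_sq: "(A,hA,vA) \<in> Sn_obj C Z n \<Longrightarrow> j < k \<Longrightarrow> k < n \<Longrightarrow>
   sq C (hA j k) (vA j k) (vA j (k + 1)) (hA (j + 1) k)"
  unfolding Sn_obj_iff by blast

lemma cell_hom:
  assumes oX: "(A,hA,vA) \<in> Sn_obj C Z n" and oY: "(A',hA',vA') \<in> Sn_obj C Z n"
    and f: "f \<in> Sn_hom C Z n (A,hA,vA) (A',hA',vA')" and jk: "j < k" "k < n"
  shows "(f j k, f j (k+1), f (j+1) k, f (j+1) (k+1)) \<in> Hom (square_cat C)
     (hA j k, vA j k, vA j (k+1), hA (j+1) k) (hA' j k, vA' j k, vA' j (k+1), hA' (j+1) k)"
proof -
  have a: "f j k \<in> ver C \<and> vdom C (f j k) = A j k \<and> vcod C (f j k) = A' j k" using SnH_v[OF f, of j k] jk by auto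
  have b: "f j (k+1) \<in> ver C \<and> vdom C (f j (k+1)) = A j (k+1) \<and> vcod C (f j (k+1)) = A' j (k+1)" using SnH_v[OF f, of j "k+1"] jk by auto
  have c: "f (j+1) k \<in> ver C \<and> vdom C (f (j+1) k) = A (j+1) k \<and> vcod C (f (j+1) k) = A' (j+1) k" using SnH_v[OF f, of "j+1" k] jk by auto
  have d: "f (j+1) (k+1) \<in> ver C \<and> vdom C (f (j+1) (k+1)) = A (j+1) (k+1) \<and> vcod C (f (j+1) (k+1)) = A' (j+1) (k+1)" using SnH_v[OF f, of "j+1" "k+1"] jk by auto
  have h1: "hdom C (hA j k) = A j k \<and> hcod C (hA j k) = A j (k + 1)" using SnO_h[OF oX, of j k] jk by auto
  have h2: "hdom C (hA' j k) = A' j k \<and> hcod C (hA' j k) = A' j (k + 1)" using SnO_h[OF oY, of j k] jk by auto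
  have h3: "hdom C (hA (j+1) k) = A (j+1) k \<and> hcod C (hA (j+1) k) = A (j+1) (k + 1)" using SnO_h[OF oX, of "j+1" k] jk by auto
  have h4: "hdom C (hA' (j+1) k) = A' (j+1) k \<and> hcod C (hA' (j+1) k) = A' (j+1) (k + 1)" using SnO_h[OF oY, of "j+1" k] jk by auto
  have s1: "sq C (hA j k) (f j k) (f j (k + 1)) (hA' j k)" using SnH_sq[OF f, of j k] jk by auto
  have s2: "sq C (hA (j+1) k) (f (j+1) k) (f (j+1) (k + 1)) (hA' (j+1) k)" using SnH_sq[OF f, of "j+1" k] jk by auto
  have c1: "vcomp C (vA' j k) (f j k) = vcomp C (f (j + 1) k) (vA j k)" using SnH_c[OF f, of j k] jk by auto
  have c2: "vcomp C (vA' j (k+1)) (f j (k+1)) = vcomp C (f (j + 1) (k+1)) (vA j (k+1))" using SnH_c[OF f, of j "k+1"] jk by auto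
  show ?thesis unfolding sq_hom using a b c d h1 h2 h3 h4 s1 s2 c1 c2 by simp
qed

lemma U_faithful:
  assumes oX: "(A,hA,vA) \<in> Sn_obj C Z n" and oY: "(A',hA',vA') \<in> Sn_obj C Z n"
    and f: "f \<in> Sn_hom C Z n (A,hA,vA) (A',hA',vA')" and f': "f' \<in> Sn_hom C Z n (A,hA,vA) (A',hA',vA')"
    and eq: "Un_m n X Y f = Un_m n X Y f'"
  shows "f = f'"
proof -
  have col: "f j n = f' j n" if "j < n" for j
  proof -
    have "Un_m n X Y f (j+1) = Un_m n X Y f' (j+1)" using eq by simp
    then show ?thesis using that by (simp add: Un_m_def)
  qed
  have main: "\<forall>j k. 2*n - j - k = m \<longrightarrow> j \<le> k \<longrightarrow> k \<le> n \<longrightarrow> f j k = f' j k" for m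
  proof (induction m rule: less_induct)
    case (less m)
    show ?case
    proof (intro allI impI)
      fix j k assume m: "2*n - j - k = m" and jk: "j \<le> k" "k \<le> n"
      show "f j k = f' j k"
      proof (cases "j = k")
        case True then show ?thesis using Sn_fnn[OF f oX oY] Sn_fnn[OF f' oX oY] jk by simp
      next
        case False
        show ?thesis
        proof (cases "k = n")
          case True then show ?thesis using col False jk by simp
        next
          case False2: False
          have jk2: "j < k" "k < n" using False False2 jk by auto
          have i1: "f j (k+1) = f' j (k+1)" using less[rule_format, of "2*n - j - (k+1)" j "k+1"] jk2 m by auto
          have i2: "f (j+1) k = f' (j+1) k" using less[rule_format, of "2*n - (j+1) - k" "j+1" k] jk2 m by auto
          have i3: "f (j+1) (k+1) = f' (j+1) (k+1)" using less[rule_format, of "2*n - (j+1) - (k+1)" "j+1" "k+1"] jk2 m by auto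
          show ?thesis
            apply (rule sqhom_cancel[OF SnO_sq[OF oX jk2] SnO_sq[OF oY jk2] cell_hom[OF oX oY f jk2]])
            using cell_hom[OF oX oY f' jk2] i1 i2 i3 by simp
        qed
      qed
    qed
  qed
  show ?thesis
  proof (rule ext, rule ext)
    fix j k show "f j k = f' j k"
    proof (cases "j \<le> k \<and> k \<le> n")
      case True then show ?thesis using main by blast
    next
      case False then show ?thesis using SnH_u[OF f] SnH_u[OF f'] by metis
    qed
  qed
qed

end

function lft :: "('o,'h,'v) dbl \<Rightarrow> 'o \<Rightarrow> nat \<Rightarrow> (nat \<Rightarrow> nat \<Rightarrow> 'h) \<Rightarrow> (nat \<Rightarrow> nat \<Rightarrow> 'v)
    \<Rightarrow> (nat \<Rightarrow> nat \<Rightarrow> 'h) \<Rightarrow> (nat \<Rightarrow> nat \<Rightarrow> 'v) \<Rightarrow> (nat \<Rightarrow> 'v) \<Rightarrow> nat \<Rightarrow> nat \<Rightarrow> 'v" where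
  "lft C Z n hA vA hA' vA' g j k = (if k \<le> j then vid C Z else if n \<le> k then g (Suc j) else
     (let tb = lft C Z n hA vA hA' vA' g j (Suc k);
          tc = lft C Z n hA vA hA' vA' g (Suc j) k;
          td = lft C Z n hA vA hA' vA' g (Suc j) (Suc k) in
      SOME x. (x, tb, tc, td) \<in> Hom (square_cat C) (hA j k, vA j k, vA j (Suc k), hA (Suc j) k)
                                       (hA' j k, vA' j k, vA' j (Suc k), hA' (Suc j) k)))"
  by pat_completeness auto
termination
  by (relation "measures [\<lambda>(C,Z,n,hA,vA,hA',vA',g,j,k). n - k, \<lambda>(C,Z,n,hA,vA,hA',vA',g,j,k). k - j]") auto

declare lft.simps[simp del]

function bld :: "('o,'h,'v) dbl \<Rightarrow> 'o \<Rightarrow> nat \<Rightarrow> (nat \<Rightarrow> 'v) \<Rightarrow> nat \<Rightarrow> nat \<Rightarrow> 'h \<times> 'v" where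
  "bld C Z n p j k = (if n \<le> k then (undefined, p (Suc j))
     else if k \<le> j then (hinit C Z (vdom C (snd (bld C Z n p k (Suc k)))), undefined)
     else (let v = snd (bld C Z n p j (Suc k)); h = fst (bld C Z n p (Suc j) k) in
           SOME tl. sq C (fst tl) (snd tl) v h))"
  by pat_completeness auto
termination
  by (relation "measures [\<lambda>(C,Z,n,p,j,k). n - k, \<lambda>(C,Z,n,p,j,k). k - j]") auto

declare bld.simps[simp del]

context isoC begin

lemma lft_diag: "k \<le> j \<Longrightarrow> lft C Z n hA vA hA' vA' g j k = vid C Z"
  by (subst lft.simps) simp
lemma lft_col: "j < n \<Longrightarrow> lft C Z n hA vA hA' vA' g j n = g (Suc j)"
  by (subst lft.simps) simp
lemma lft_cell: "j < k \<Longrightarrow> k < n \<Longrightarrow> lft C Z n hA vA hA' vA' g j k =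
     (SOME x. (x, lft C Z n hA vA hA' vA' g j (Suc k), lft C Z n hA vA hA' vA' g (Suc j) k, lft C Z n hA vA hA' vA' g (Suc j) (Suc k))
        \<in> Hom (square_cat C) (hA j k, vA j k, vA j (Suc k), hA (Suc j) k)
                                       (hA' j k, vA' j k, vA' j (Suc k), hA' (Suc j) k))"
  by (subst lft.simps) (simp add: Let_def)

lemma U_full:
  assumes oX: "(A,hA,vA) \<in> Sn_obj C Z n" and oY: "(A',hA',vA') \<in> Sn_obj C Z n"
    and g: "g \<in> Vn_hom C Z n (Un_o n (A,hA,vA)) (Un_o n (A',hA',vA'))"
  shows "\<exists>f \<in> Sn_hom C Z n (A,hA,vA) (A',hA',vA'). Un_m n X Y f = g"
proof -
  define L where "L = lft C Z n hA vA hA' vA' g"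
  have gg: "g \<in> Vn_hom C Z n (\<lambda>i. if 1 \<le> i \<and> i \<le> n then A (i - 1) n else undefined, \<lambda>i. if 1 \<le> i \<and> i \<le> n then vA (i - 1) n else undefined)
     (\<lambda>i. if 1 \<le> i \<and> i \<le> n then A' (i - 1) n else undefined, \<lambda>i. if 1 \<le> i \<and> i \<le> n then vA' (i - 1) n else undefined)"
    using g by (simp add: Un_o_def)
  note gh = gg[unfolded Vn_hom_iff]
  have gu: "\<not> (1 \<le> i \<and> i \<le> n) \<Longrightarrow> g i = undefined" for i using gh[THEN conjunct1] by blast
  have gv: "g (Suc j) \<in> ver C \<and> vdom C (g (Suc j)) = A j n \<and> vcod C (g (Suc j)) = A' j n \<and> vweq C Z (g (Suc j))"
    if "j < n" for j
    using gh[THEN conjunct2, THEN conjunct1, rule_format, of "Suc j"] that by simp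
  have gc1: "vcomp C (vA' j n) (g (Suc j)) = vcomp C (g (Suc (Suc j))) (vA j n)" if "Suc j < n" for j
    using gh[THEN conjunct2, THEN conjunct2, THEN conjunct1, rule_format, of "Suc j"] that by simp
  have gc2: "vcomp C (vA' j n) (g (Suc j)) = vA j n" if "Suc j = n" for j
  proof -
    have "vcomp C (vA' j n) (g (Suc j)) = vcomp C (vid C Z) (vA j n)"
      using gh[THEN conjunct2, THEN conjunct2, THEN conjunct2] that[symmetric] by simp
    moreover have "vA j n \<in> ver C \<and> vcod C (vA j n) = Z" using SnO_v[OF oX, of j n] SnO_d[OF oX, of n] that by auto
    ultimately show ?thesis using vid_l[of "vA j n"] by simp
  qed
  have vZ: "vid C Z \<in> ver C \<and> vdom C (vid C Z) = Z \<and> vcod C (vid C Z) = Z" using vid[OF Zobj] .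
  have J: "\<forall>j k. 2*n - j - k = m \<longrightarrow> j < k \<longrightarrow> k \<le> n \<longrightarrow>
      L j k \<in> ver C \<and> vdom C (L j k) = A j k \<and> vcod C (L j k) = A' j k \<and> vweq C Z (L j k) \<and>
      (k < n \<longrightarrow> sq C (hA j k) (L j k) (L j (Suc k)) (hA' j k)) \<and>
      vcomp C (vA' j k) (L j k) = vcomp C (L (Suc j) k) (vA j k)" for m
  proof (induction m rule: less_induct)
    case (less m)
    show ?case
    proof (intro allI impI)
      fix j k assume m: "2*n - j - k = m" and jk: "j < k" "k \<le> n"
      show "L j k \<in> ver C \<and> vdom C (L j k) = A j k \<and> vcod C (L j k) = A' j k \<and> vweq C Z (L j k) \<and>
        (k < n \<longrightarrow> sq C (hA j k) (L j k) (L j (Suc k)) (hA' j k)) \<and>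
        vcomp C (vA' j k) (L j k) = vcomp C (L (Suc j) k) (vA j k)"
      proof (cases "k = n")
        case True
        have Le: "L j n = g (Suc j)" unfolding L_def using lft_col jk True by simp
        have c: "vcomp C (vA' j k) (L j k) = vcomp C (L (Suc j) k) (vA j k)"
        proof (cases "Suc j < n")
          case True
          then show ?thesis using gc1[OF True] Le \<open>k = n\<close> lft_col[of "Suc j" n] unfolding L_def by simp
        next
          case False
          then have sj: "Suc j = n" using jk \<open>k = n\<close> by simp
          have va: "vA j n \<in> ver C \<and> vcod C (vA j n) = Z" using SnO_v[OF oX, of j n] SnO_d[OF oX, of n] sj by auto
          have e1: "L (Suc j) n = vid C Z" unfolding L_def using lft_diag[of n "Suc j"] sj by simp
          have "vcomp C (vid C Z) (vA j n) = vA j n" using vid_l[of "vA j n"] va by simp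
          then show ?thesis using gc2[OF sj] Le \<open>k = n\<close> e1 by simp
        qed
        show ?thesis using gv[of j] jk True Le c by simp
      next
        case False
        then have jk2: "j < k" "k < n" using jk by auto
        define tb where "tb = L j (Suc k)"
        define tc where "tc = L (Suc j) k"
        define td where "td = L (Suc j) (Suc k)"
        have IH1: "tb \<in> ver C \<and> vdom C tb = A j (Suc k) \<and> vcod C tb = A' j (Suc k) \<and> vweq C Z tb \<and>
             vcomp C (vA' j (Suc k)) tb = vcomp C td (vA j (Suc k))"
          using less[rule_format, of "2*n - j - Suc k" j "Suc k"] jk2 m unfolding tb_def td_def by auto
        have IH3: "td \<in> ver C \<and> vdom C td = A (Suc j) (Suc k) \<and> vcod C td = A' (Suc j) (Suc k) \<and> vweq C Z td"
          using less[rule_format, of "2*n - Suc j - Suc k" "Suc j" "Suc k"] jk2 m unfolding td_def by auto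
        have IH2: "tc \<in> ver C \<and> vdom C tc = A (Suc j) k \<and> vcod C tc = A' (Suc j) k \<and>
             sq C (hA (Suc j) k) tc td (hA' (Suc j) k)"
        proof (cases "Suc j = k")
          case True
          have tce: "tc = vid C Z" unfolding tc_def L_def using lft_diag True by simp
          have d: "A (Suc j) k = Z" "A' (Suc j) k = Z" using SnO_d[OF oX] SnO_d[OF oY] True jk2 by auto
          have h1: "hA k k = hinit C Z (A k (Suc k))" using SnO_h[OF oX, of k k] jk2 d True hinit_eq by auto
          have h2: "hA' k k = hinit C Z (A' k (Suc k))" using SnO_h[OF oY, of k k] jk2 d True hinit_eq by auto
          have "sq C (hinit C Z (vdom C td)) (vid C Z) td (hinit C Z (vcod C td))" using IH3 unfolding vweq_def by auto
          then show ?thesis using tce d h1 h2 True IH3 vZ by simp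
        next
          case False
          then show ?thesis
            using less[rule_format, of "2*n - Suc j - k" "Suc j" k] jk2 m unfolding tc_def td_def by auto
        qed
        have vx: "vA j (Suc k) \<in> ver C \<and> vdom C (vA j (Suc k)) = A j (Suc k) \<and> vcod C (vA j (Suc k)) = A (Suc j) (Suc k)"
          using SnO_v[OF oX, of j "Suc k"] jk2 by auto
        have vy: "vA' j (Suc k) \<in> ver C \<and> vdom C (vA' j (Suc k)) = A' j (Suc k) \<and> vcod C (vA' j (Suc k)) = A' (Suc j) (Suc k)"
          using SnO_v[OF oY, of j "Suc k"] jk2 by auto
        have hx: "hA (Suc j) k \<in> hor C \<and> hdom C (hA (Suc j) k) = A (Suc j) k"
          using SnO_h[OF oX, of "Suc j" k] jk2 by auto
        have hy: "hA' (Suc j) k \<in> hor C \<and> hdom C (hA' (Suc j) k) = A' (Suc j) k"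
          using SnO_h[OF oY, of "Suc j" k] jk2 by auto
        have phi: "(tb,tc,td) \<in> Hom (cospan_cat C) (vA j (Suc k), hA (Suc j) k) (vA' j (Suc k), hA' (Suc j) k)"
          unfolding co_hom using IH1 IH2 IH3 vx vy hx hy by simp
        have sX: "sq C (hA j k) (vA j k) (vA j (Suc k)) (hA (Suc j) k)" using SnO_sq[OF oX jk2] by simp
        have sY: "sq C (hA' j k) (vA' j k) (vA' j (Suc k)) (hA' (Suc j) k)" using SnO_sq[OF oY jk2] by simp
        have ex: "\<exists>x. (x,tb,tc,td) \<in> Hom (square_cat C) (hA j k, vA j k, vA j (Suc k), hA (Suc j) k)
                                       (hA' j k, vA' j k, vA' j (Suc k), hA' (Suc j) k)"
          using sqhom_lift[OF sX sY phi] .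
        have Le: "L j k = (SOME x. (x,tb,tc,td) \<in> Hom (square_cat C) (hA j k, vA j k, vA j (Suc k), hA (Suc j) k)
                                       (hA' j k, vA' j k, vA' j (Suc k), hA' (Suc j) k))"
          unfolding L_def tb_def tc_def td_def using lft_cell[OF jk2] by simp
        have H: "(L j k,tb,tc,td) \<in> Hom (square_cat C) (hA j k, vA j k, vA j (Suc k), hA (Suc j) k)
                                       (hA' j k, vA' j k, vA' j (Suc k), hA' (Suc j) k)"
          unfolding Le using someI_ex[OF ex] .
        have h1: "hdom C (hA j k) = A j k" using SnO_h[OF oX, of j k] jk2 by auto
        have h2: "hdom C (hA' j k) = A' j k" using SnO_h[OF oY, of j k] jk2 by auto
        have P: "L j k \<in> ver C \<and> vdom C (L j k) = A j k \<and> vcod C (L j k) = A' j k \<and>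
             sq C (hA j k) (L j k) tb (hA' j k) \<and> vcomp C (vA' j k) (L j k) = vcomp C tc (vA j k)"
          using H h1 h2 unfolding sq_hom by simp
        have W: "vweq C Z (L j k)" using vweq_left[of "hA j k" "L j k" tb "hA' j k"] P IH1 by simp
        show ?thesis using P W jk2 unfolding tb_def tc_def by simp
      qed
    qed
  qed
  define f where "f j k = (if j \<le> k \<and> k \<le> n then L j k else undefined)" for j k
  have Ld: "L j j = vid C Z" for j unfolding L_def using lft_diag by simp
  have fS: "f \<in> Sn_hom C Z n (A,hA,vA) (A',hA',vA')"
    unfolding Sn_hom_iff
  proof ((intro conjI); (intro allI impI))
    fix j k assume a: "\<not> (j \<le> k \<and> k \<le> n)" then show "f j k = undefined" unfolding f_def by auto
  next
    fix j k assume a: "j \<le> k \<and> k \<le> n"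
    show "f j k \<in> ver C \<and> vdom C (f j k) = A j k \<and> vcod C (f j k) = A' j k \<and> vweq C Z (f j k)"
    proof (cases "j = k")
      case True
      then show ?thesis using Ld SnO_d[OF oX, of j] SnO_d[OF oY, of j] a vZ vweq_vid[OF Zobj] unfolding f_def by simp
    next
      case False
      then show ?thesis using J[of "2*n - j - k"] a unfolding f_def by auto
    qed
  next
    fix j k assume a: "j \<le> k \<and> k < n"
    show "sq C (hA j k) (f j k) (f j (k + 1)) (hA' j k)"
    proof (cases "j = k")
      case True
      have T: "L j (Suc k) \<in> ver C \<and> vdom C (L j (Suc k)) = A j (Suc k) \<and> vcod C (L j (Suc k)) = A' j (Suc k) \<and> vweq C Z (L j (Suc k))"
        using J[of "2*n - j - Suc k"] a True by auto
      have d: "A k k = Z" "A' k k = Z" using SnO_d[OF oX] SnO_d[OF oY] a by auto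
      have h1: "hA k k = hinit C Z (A k (Suc k))" using SnO_h[OF oX, of k k] a d hinit_eq by auto
      have h2: "hA' k k = hinit C Z (A' k (Suc k))" using SnO_h[OF oY, of k k] a d hinit_eq by auto
      have "sq C (hinit C Z (A k (Suc k))) (vid C Z) (L j (Suc k)) (hinit C Z (A' k (Suc k)))"
        using T True unfolding vweq_def by auto
      then show ?thesis using h1 h2 True a Ld unfolding f_def by simp
    next
      case False
      then show ?thesis using J[of "2*n - j - k"] a unfolding f_def by auto
    qed
  next
    fix j k assume a: "j < k \<and> k \<le> n"
    show "vcomp C (vA' j k) (f j k) = vcomp C (f (j + 1) k) (vA j k)"
      using J[of "2*n - j - k"] a unfolding f_def by auto
  qed
  have "Un_m n X Y f = g"
  proof (rule ext)
    fix i show "Un_m n X Y f i = g i"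
    proof (cases "1 \<le> i \<and> i \<le> n")
      case True
      then have "f (i - 1) n = L (i - 1) n" unfolding f_def by auto
      also have "\<dots> = g (Suc (i - 1))"
      proof -
        have "i - 1 < n" using True by arith
        then show ?thesis unfolding L_def by (rule lft_col)
      qed
      finally show ?thesis using True by (simp add: Un_m_def)
    next
      case False then show ?thesis using gu by (auto simp add: Un_m_def)
    qed
  qed
  then show ?thesis using fS by blast
qed



lemma bld_col: "bld C Z n p j n = (undefined, p (Suc j))"
  by (subst bld.simps) simp
lemma bld_diag: "k < n \<Longrightarrow> fst (bld C Z n p k k) = hinit C Z (vdom C (snd (bld C Z n p k (Suc k))))"
  by (subst bld.simps) simp
lemma bld_cell: "j < k \<Longrightarrow> k < n \<Longrightarrow> bld C Z n p j k =
    (SOME tl. sq C (fst tl) (snd tl) (snd (bld C Z n p j (Suc k))) (fst (bld C Z n p (Suc j) k)))"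
  by (subst bld.simps) (simp add: Let_def)

lemma U_surj:
  assumes Y: "(a,p) \<in> Vn_obj C Z n"
  shows "\<exists>X \<in> Sn_obj C Z n. Un_o n X = (a,p)"
proof -
  note yy = Y[unfolded Vn_obj_iff]
  have yu: "\<not> (1 \<le> i \<and> i \<le> n) \<Longrightarrow> a i = undefined \<and> p i = undefined" for i using yy[THEN conjunct1] by blast
  have yv: "j < n \<Longrightarrow> a (Suc j) \<in> obj C \<and> p (Suc j) \<in> ver C \<and> vdom C (p (Suc j)) = a (Suc j)" for j
    using yy[THEN conjunct2, THEN conjunct1, rule_format, of "Suc j"] by simp
  have yc: "Suc j < n \<Longrightarrow> vcod C (p (Suc j)) = a (Suc (Suc j))" for j
    using yy[THEN conjunct2, THEN conjunct2, THEN conjunct1, rule_format, of "Suc j"] by simp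
  have yl: "Suc j = n \<Longrightarrow> vcod C (p (Suc j)) = Z" for j
    using yy[THEN conjunct2, THEN conjunct2, THEN conjunct2] by auto
  define cv where "cv j k = snd (bld C Z n p j k)" for j k
  define ch where "ch j k = fst (bld C Z n p j k)" for j k
  define Ao where "Ao i k = (if i = k then Z else vdom C (cv i k))" for i k
  have cvn: "cv j n = p (Suc j)" for j unfolding cv_def using bld_col by simp
  have chd: "k < n \<Longrightarrow> ch k k = hinit C Z (vdom C (cv k (Suc k)))" for k unfolding ch_def cv_def using bld_diag by simp
  have I: "\<forall>j k. 2*n - j - k = m \<longrightarrow> j < k \<longrightarrow> k \<le> n \<longrightarrow>
      cv j k \<in> ver C \<and> vcod C (cv j k) = Ao (Suc j) k \<and>
      (k < n \<longrightarrow> ch j k \<in> hor C \<and> hdom C (ch j k) = vdom C (cv j k) \<and> hcod C (ch j k) = vdom C (cv j (Suc k)) \<and>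
         sq C (ch j k) (cv j k) (cv j (Suc k)) (ch (Suc j) k))" for m
  proof (induction m rule: less_induct)
    case (less m)
    show ?case
    proof (intro allI impI)
      fix j k assume m: "2*n - j - k = m" and jk: "j < k" "k \<le> n"
      show "cv j k \<in> ver C \<and> vcod C (cv j k) = Ao (Suc j) k \<and>
        (k < n \<longrightarrow> ch j k \<in> hor C \<and> hdom C (ch j k) = vdom C (cv j k) \<and> hcod C (ch j k) = vdom C (cv j (Suc k)) \<and>
         sq C (ch j k) (cv j k) (cv j (Suc k)) (ch (Suc j) k))"
      proof (cases "k = n")
        case True
        have v: "cv j k \<in> ver C" using yv[of j] jk True cvn by simp
        have c: "vcod C (cv j k) = Ao (Suc j) k"
        proof (cases "Suc j = n")
          case True
          then show ?thesis using yl[OF True] cvn \<open>k = n\<close> unfolding Ao_def by simp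
        next
          case False
          then have sj: "Suc j < n" using jk \<open>k = n\<close> by simp
          then show ?thesis using yc[OF sj] yv[of "Suc j"] cvn \<open>k = n\<close> unfolding Ao_def by simp
        qed
        show ?thesis using v c True by simp
      next
        case False
        then have jk2: "j < k" "k < n" using jk by auto
        have IH1: "cv j (Suc k) \<in> ver C \<and> vcod C (cv j (Suc k)) = Ao (Suc j) (Suc k)"
          using less[rule_format, of "2*n - j - Suc k" j "Suc k"] jk2 m by auto
        have IH3: "cv (Suc j) (Suc k) \<in> ver C"
          using less[rule_format, of "2*n - Suc j - Suc k" "Suc j" "Suc k"] jk2 m by auto
        have IH2: "ch (Suc j) k \<in> hor C \<and> hdom C (ch (Suc j) k) = Ao (Suc j) k \<and> hcod C (ch (Suc j) k) = vdom C (cv (Suc j) (Suc k))"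
        proof (cases "Suc j = k")
          case True
          have "vdom C (cv (Suc j) (Suc k)) \<in> obj C" using ver_dom IH3 by blast
          then show ?thesis using chd[of k] jk2 True hinit unfolding Ao_def by simp
        next
          case False
          then have "Suc j < k" using jk2 by simp
          then show ?thesis
            using less[rule_format, of "2*n - Suc j - k" "Suc j" k] jk2 m unfolding Ao_def by auto
        qed
        have cod: "vcod C (cv j (Suc k)) = hcod C (ch (Suc j) k)" using IH1 IH2 jk2 unfolding Ao_def by simp
        have ex: "\<exists>tl. sq C (fst tl) (snd tl) (cv j (Suc k)) (ch (Suc j) k)"
          using filler[of "cv j (Suc k)" "ch (Suc j) k"] IH1 IH2 cod by auto
        have be: "bld C Z n p j k = (SOME tl. sq C (fst tl) (snd tl) (cv j (Suc k)) (ch (Suc j) k))"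
          using bld_cell[OF jk2] unfolding cv_def ch_def by simp
        have S: "sq C (ch j k) (cv j k) (cv j (Suc k)) (ch (Suc j) k)"
          using someI_ex[OF ex] be unfolding ch_def cv_def by simp
        show ?thesis using sq_wf[OF S] IH2 jk2 S by simp
      qed
    qed
  qed
  have Iv: "j < k \<Longrightarrow> k \<le> n \<Longrightarrow> cv j k \<in> ver C \<and> vcod C (cv j k) = Ao (Suc j) k" for j k
    using I[of "2*n - j - k"] by simp
  have Ih: "j < k \<Longrightarrow> k < n \<Longrightarrow> ch j k \<in> hor C \<and> hdom C (ch j k) = vdom C (cv j k) \<and> hcod C (ch j k) = vdom C (cv j (Suc k)) \<and>
         sq C (ch j k) (cv j k) (cv j (Suc k)) (ch (Suc j) k)" for j k
    using I[of "2*n - j - k"] by simp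
  define A where "A j k = (if j \<le> k \<and> k \<le> n then Ao j k else undefined)" for j k
  define hA where "hA j k = (if j \<le> k \<and> k < n then ch j k else undefined)" for j k
  define vA where "vA j k = (if j < k \<and> k \<le> n then cv j k else undefined)" for j k
  have o: "(A,hA,vA) \<in> Sn_obj C Z n"
    unfolding Sn_obj_iff
  proof ((intro conjI); (intro allI impI))
    fix j k assume "\<not> (j \<le> k \<and> k \<le> n)" then show "A j k = undefined" unfolding A_def by auto
  next
    fix j k assume "\<not> (j \<le> k \<and> k < n)" then show "hA j k = undefined" unfolding hA_def by auto
  next
    fix j k assume "\<not> (j < k \<and> k \<le> n)" then show "vA j k = undefined" unfolding vA_def by auto
  next
    fix j assume "j \<le> n" then show "A j j = Z" unfolding A_def Ao_def by simp
  next
    fix j k assume a: "j \<le> k \<and> k \<le> n"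
    show "A j k \<in> obj C"
    proof (cases "j = k")
      case True then show ?thesis using a Zobj unfolding A_def Ao_def by simp
    next
      case False then show ?thesis using a Iv[of j k] ver_dom unfolding A_def Ao_def by auto
    qed
  next
    fix j k assume a: "j \<le> k \<and> k < n"
    have v1: "cv j (Suc k) \<in> ver C" using Iv[of j "Suc k"] a by simp
    show "hA j k \<in> hor C \<and> hdom C (hA j k) = A j k \<and> hcod C (hA j k) = A j (k + 1)"
    proof (cases "j = k")
      case True
      have "vdom C (cv k (Suc k)) \<in> obj C" using ver_dom v1 True by blast
      then show ?thesis using chd[of k] a True hinit unfolding A_def hA_def Ao_def by simp
    next
      case False then show ?thesis using a Ih[of j k] unfolding A_def hA_def Ao_def by auto
    qed
  next
    fix j k assume a: "j < k \<and> k \<le> n"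
    show "vA j k \<in> ver C \<and> vdom C (vA j k) = A j k \<and> vcod C (vA j k) = A (j + 1) k"
      using a Iv[of j k] unfolding A_def vA_def Ao_def by auto
  next
    fix j k assume a: "j < k \<and> k < n"
    show "sq C (hA j k) (vA j k) (vA j (k + 1)) (hA (j + 1) k)"
      using a Ih[of j k] unfolding hA_def vA_def by auto
  qed
  have "Un_o n (A,hA,vA) = (a,p)"
  proof -
    have "(\<lambda>i. if 1 \<le> i \<and> i \<le> n then A (i - 1) n else undefined) = a"
    proof (rule ext)
      fix i show "(if 1 \<le> i \<and> i \<le> n then A (i - 1) n else undefined) = a i"
      proof (cases "1 \<le> i \<and> i \<le> n")
        case True
        then have e: "Suc (i - 1) = i" "i - 1 \<noteq> n" "i - 1 < n" by arith+
        have "A (i - 1) n = vdom C (p i)" using True e cvn[of "i - 1"] unfolding A_def Ao_def by simp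
        also have "\<dots> = a i" using yv[of "i - 1"] e by simp
        finally show ?thesis using True by simp
      next
        case False then show ?thesis using yu[of i] by auto
      qed
    qed
    moreover have "(\<lambda>i. if 1 \<le> i \<and> i \<le> n then vA (i - 1) n else undefined) = p"
    proof (rule ext)
      fix i show "(if 1 \<le> i \<and> i \<le> n then vA (i - 1) n else undefined) = p i"
      proof (cases "1 \<le> i \<and> i \<le> n")
        case True
        then have e: "Suc (i - 1) = i" "i - 1 < n" by arith+
        show ?thesis using True e cvn[of "i - 1"] unfolding vA_def by simp
      next
        case False then show ?thesis using yu[of i] by auto
      qed
    qed
    ultimately show ?thesis by (simp add: Un_o_def)
  qed
  then show ?thesis using o by blast
qed


theorem main_equiv: "is_equivalence (Sn_cat C Z n) (Vn_cat C Z n) (Un_o n) (Un_m n)"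
proof (rule equiv_from_ff[OF U_functor])
  fix X assume "X \<in> Ob (Sn_cat C Z n)" then show "Id (Sn_cat C Z n) X \<in> Hom (Sn_cat C Z n) X X" by (rule Sn_Id)
next
  fix X Y W f g assume "X \<in> Ob (Sn_cat C Z n)" "Y \<in> Ob (Sn_cat C Z n)" "W \<in> Ob (Sn_cat C Z n)"
    "f \<in> Hom (Sn_cat C Z n) X Y" "g \<in> Hom (Sn_cat C Z n) Y W"
  then show "Cmp (Sn_cat C Z n) g f \<in> Hom (Sn_cat C Z n) X W" by (rule Sn_Cmp)
next
  fix Y assume "Y \<in> Ob (Vn_cat C Z n)" then show "Id (Vn_cat C Z n) Y \<in> Hom (Vn_cat C Z n) Y Y" by (rule Vn_Id)
next
  fix X Y f assume "X \<in> Ob (Vn_cat C Z n)" "Y \<in> Ob (Vn_cat C Z n)" "f \<in> Hom (Vn_cat C Z n) X Y"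
  then show "Cmp (Vn_cat C Z n) (Id (Vn_cat C Z n) Y) f = f" by (rule Vn_l(1))
next
  fix X Y f assume "X \<in> Ob (Vn_cat C Z n)" "Y \<in> Ob (Vn_cat C Z n)" "f \<in> Hom (Vn_cat C Z n) X Y"
  then show "Cmp (Vn_cat C Z n) f (Id (Vn_cat C Z n) X) = f" by (rule Vn_l(2))
next
  fix Y assume Y: "Y \<in> Ob (Vn_cat C Z n)"
  obtain a p where Ye: "Y = (a,p)" by (cases Y)
  have "(a,p) \<in> Vn_obj C Z n" using Y Ye by (simp add: Vn_cat_def)
  then show "\<exists>X\<in>Ob (Sn_cat C Z n). Un_o n X = Y" using U_surj Ye by (simp add: Sn_cat_def)
next
  fix X X' g assume X: "X \<in> Ob (Sn_cat C Z n)" and X': "X' \<in> Ob (Sn_cat C Z n)"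
    and g: "g \<in> Hom (Vn_cat C Z n) (Un_o n X) (Un_o n X')"
  obtain A hA vA where Xe: "X = (A,hA,vA)" by (cases X)
  obtain A' hA' vA' where X'e: "X' = (A',hA',vA')" by (cases X')
  have oX: "(A,hA,vA) \<in> Sn_obj C Z n" using X Xe by (simp add: Sn_cat_def)
  have oY: "(A',hA',vA') \<in> Sn_obj C Z n" using X' X'e by (simp add: Sn_cat_def)
  have gh: "g \<in> Vn_hom C Z n (Un_o n (A,hA,vA)) (Un_o n (A',hA',vA'))" using g Xe X'e by (simp add: Vn_cat_def)
  show "\<exists>f\<in>Hom (Sn_cat C Z n) X X'. Un_m n X X' f = g"
    using U_full[OF oX oY gh, of X X'] Xe X'e by (simp add: Sn_cat_def)
next
  fix X X' f f' assume X: "X \<in> Ob (Sn_cat C Z n)" and X': "X' \<in> Ob (Sn_cat C Z n)"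
    and f: "f \<in> Hom (Sn_cat C Z n) X X'" and f': "f' \<in> Hom (Sn_cat C Z n) X X'"
    and eq: "Un_m n X X' f = Un_m n X X' f'"
  obtain A hA vA where Xe: "X = (A,hA,vA)" by (cases X)
  obtain A' hA' vA' where X'e: "X' = (A',hA',vA')" by (cases X')
  have oX: "(A,hA,vA) \<in> Sn_obj C Z n" using X Xe by (simp add: Sn_cat_def)
  have oY: "(A',hA',vA') \<in> Sn_obj C Z n" using X' X'e by (simp add: Sn_cat_def)
  have fh: "f \<in> Sn_hom C Z n (A,hA,vA) (A',hA',vA')" using f Xe X'e by (simp add: Sn_cat_def)
  have fh': "f' \<in> Sn_hom C Z n (A,hA,vA) (A',hA',vA')" using f' Xe X'e by (simp add: Sn_cat_def)
  show "f = f'" by (rule U_faithful[OF oX oY fh fh' eq])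
qed

end

theorem lemma3p26:
  fixes C :: "('o, 'h, 'v) dbl" and Z :: 'o and n :: nat
  assumes "isostable C Z"
  shows "is_equivalence (Sn_cat C Z n) (Vn_cat C Z n) (Un_o n) (Un_m n)"
proof -
  interpret isoC C Z by (rule isoC.intro) (rule assms)
  show ?thesis by (rule main_equiv)
qed

end
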